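(* Let $\lambda>0$, $a\in C^1(\mathbb{R}^+)$ non-decreasing and globally Lipschitz with $0<m\le a\le M$, $f\in C^2(\mathbb{R})$ odd with $f(0)=0$, $f'(0)=1$, $sf''(s)<0$ for $s\ne0$, $\limsup_{|s|\to\infty}f(s)/s\le0$. Let $N\in\mathbb{N}$ with $a(0)N^2<\lambda<a(0)(N+1)^2$, let $\phi\in\{\phi_N^+,\phi_N^-\}$ (as in the context), and for $\tau\in[0,1]$ let $a_\tau(s)=a(\tau s+(1-\tau)\|\phi_x\|^2)$ and let $\{S_\tau(t):t\ge0\}$ be the semigroup on $H^1_0(0,\pi)$ generated by $$u_t=a_\tau(\|u_x\|^2)u_{xx}+\lambda f(u),\ x\in(0,\pi),\ t>0;\quad u(t,0)=u(t,\pi)=0;\quad u(0)=u_0\in H^1_0(0,\pi).$$ If $\tau_n\to\tau_0$ in $[0,1]$, $u_0^{(n)}\to u_0$ in $H^1_0(0,\pi)$ and $t_n\to t_0$ in $\mathbb{R}^+$, then $\|S_{\tau_n}(t_n)u_0^{(n)}-S_{\tau_0}(t_0)u_0\|_{H^1_0(0,\pi)}\to0$.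
   Context: $\|\cdot\|$ is the $L^2(0,\pi)$ norm. Background: for $a(0)N^2<\lambda\le a(0)(N+1)^2$ the problem $u_t=a(\|u_x\|^2)u_{xx}+\lambda f(u)$ with Dirichlet conditions on $(0,\pi)$ has equilibria $\{0\}\cup\{\phi_j^\pm\}_{j=1}^N$ with $\phi_j^+$ having $j+1$ zeros in $[0,\pi]$, $(\phi_j^+)_x(0)>0$, $\phi_j^-=-\phi_j^+$. *)

theory Defs
  imports "HOL-Analysis.Analysis" "HOL-Library.Liminf_Limsup"
begin

text \<open>The space H^1_0(0,pi): u is the integral of a square-integrable g,
  u(x) = int_0^x g on [0,pi], with u(pi) = 0 (hence also u(0) = 0).
  g is the weak derivative u_x.\<close>

definition h10_rep :: "(real \<Rightarrow> real) \<Rightarrow> (real \<Rightarrow> real) \<Rightarrow> bool" where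
  "h10_rep u g \<longleftrightarrow> g integrable_on {0..pi} \<and> (\<lambda>x. (g x)^2) integrable_on {0..pi} \<and>
     (\<forall>x\<in>{0..pi}. u x = integral {0..x} g) \<and> u pi = 0"

definition h10 :: "(real \<Rightarrow> real) \<Rightarrow> bool" where
  "h10 u \<longleftrightarrow> (\<exists>g. h10_rep u g)"

definition h10_deriv :: "(real \<Rightarrow> real) \<Rightarrow> real \<Rightarrow> real" where
  "h10_deriv u = (SOME g. h10_rep u g)"

definition h10_sq :: "(real \<Rightarrow> real) \<Rightarrow> real" where
  "h10_sq u = integral {0..pi} (\<lambda>x. (h10_deriv u x)^2)"

definition h10_dist :: "(real \<Rightarrow> real) \<Rightarrow> (real \<Rightarrow> real) \<Rightarrow> real" where
  "h10_dist u v = sqrt (integral {0..pi} (\<lambda>x. (h10_deriv u x - h10_deriv v x)^2))"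

definition is_solution ::
  "(real \<Rightarrow> real) \<Rightarrow> real \<Rightarrow> (real \<Rightarrow> real) \<Rightarrow> (real \<Rightarrow> real) \<Rightarrow> (real \<Rightarrow> real \<Rightarrow> real) \<Rightarrow> bool" where
  "is_solution A lam f u0 u \<longleftrightarrow>
     (\<forall>t\<ge>0. h10 (u t)) \<and>
     (\<forall>x\<in>{0..pi}. u 0 x = u0 x) \<and>
     (\<forall>t0\<ge>0. ((\<lambda>t. h10_dist (u t) (u t0)) \<longlongrightarrow> 0) (at t0 within {0..})) \<and>
     (\<exists>ut ux uxx.
        continuous_on ({0<..} \<times> {0..pi}) (\<lambda>(t,x). ut t x) \<and>
        continuous_on ({0<..} \<times> {0..pi}) (\<lambda>(t,x). ux t x) \<and>
        continuous_on ({0<..} \<times> {0..pi}) (\<lambda>(t,x). uxx t x) \<and>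
        (\<forall>t>0. \<forall>x\<in>{0..pi}.
            ((\<lambda>s. u s x) has_real_derivative ut t x) (at t) \<and>
            ((\<lambda>y. u t y) has_real_derivative ux t x) (at x within {0..pi}) \<and>
            ((\<lambda>y. ux t y) has_real_derivative uxx t x) (at x within {0..pi})) \<and>
        (\<forall>t>0. \<forall>x\<in>{0<..<pi}.
            ut t x = A (h10_sq (u t)) * uxx t x + lam * f (u t x)))"

definition is_equilibrium ::
  "(real \<Rightarrow> real) \<Rightarrow> real \<Rightarrow> (real \<Rightarrow> real) \<Rightarrow> (real \<Rightarrow> real) \<Rightarrow> bool" where
  "is_equilibrium A lam f phi \<longleftrightarrow> h10 phi \<and>
     (\<exists>phi' phi''. continuous_on {0..pi} phi'' \<and>
        (\<forall>x\<in>{0..pi}. (phi has_real_derivative phi' x) (at x within {0..pi}) \<and>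
                       (phi' has_real_derivative phi'' x) (at x within {0..pi}) \<and>
                       A (h10_sq phi) * phi'' x + lam * f (phi x) = 0))"

end

theory Submission
  imports Defs "HOL-Probability.Distribution_Functions"
begin
lemma int_cmul: "f integrable_on S \<Longrightarrow> (\<lambda>x. c * f x) integrable_on S"
  for f :: "real \<Rightarrow> real"
  using integrable_cmul[of f S c] by simp

lemma int_divide: "f integrable_on S \<Longrightarrow> (\<lambda>x. f x / c) integrable_on S"
  for f :: "real \<Rightarrow> real"
  using int_cmul[of f S "1/c"] by simp

definition sqi :: "(real \<Rightarrow> real) \<Rightarrow> bool" where
  "sqi g \<longleftrightarrow> g integrable_on {0..pi} \<and> (\<lambda>x. (g x)^2) integrable_on {0..pi}"

lemma sqi_meas: "sqi g \<Longrightarrow> g \<in> borel_measurable (lebesgue_on {0..pi})"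
  unfolding sqi_def using integrable_imp_measurable by blast

lemma sqi_mult_int:
  assumes "sqi g" "sqi h"
  shows "(\<lambda>x. g x * h x) integrable_on {0..pi}"
proof (rule measurable_bounded_by_integrable_imp_integrable_real)
  show "(\<lambda>x. g x * h x) \<in> borel_measurable (lebesgue_on {0..pi})"
    using sqi_meas[OF assms(1)] sqi_meas[OF assms(2)] by (rule borel_measurable_times)
  show "(\<lambda>x. ((g x)^2 + (h x)^2)/2) integrable_on {0..pi}"
    using assms unfolding sqi_def by (intro int_divide integrable_add) auto
  show "\<bar>g x * h x\<bar> \<le> ((g x)^2 + (h x)^2)/2" for x
  proof -
    have "0 \<le> (\<bar>g x\<bar> - \<bar>h x\<bar>)^2" by simp
    then show ?thesis by (simp add: power2_eq_square abs_mult algebra_simps)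
  qed
qed auto

lemma sqi_add: "sqi g \<Longrightarrow> sqi h \<Longrightarrow> sqi (\<lambda>x. g x + h x)"
proof -
  assume a: "sqi g" "sqi h"
  have "(\<lambda>x. (g x)^2 + 2 * (g x * h x) + (h x)^2) integrable_on {0..pi}"
    using a sqi_mult_int[OF a] unfolding sqi_def
    by (intro integrable_add int_cmul) auto
  moreover have "(\<lambda>x. (g x)^2 + 2 * (g x * h x) + (h x)^2) = (\<lambda>x. (g x + h x)^2)"
    by (auto simp: power2_eq_square algebra_simps)
  ultimately show ?thesis using a unfolding sqi_def by (auto intro: integrable_add)
qed

lemma sqi_cmult: "sqi g \<Longrightarrow> sqi (\<lambda>x. c * g x)"
proof -
  assume a: "sqi g"
  have "(\<lambda>x. c^2 * (g x)^2) integrable_on {0..pi}"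
    using a unfolding sqi_def by (intro int_cmul) auto
  then show ?thesis using a unfolding sqi_def by (auto simp: power_mult_distrib intro: int_cmul)
qed

lemma sqi_diff: "sqi g \<Longrightarrow> sqi h \<Longrightarrow> sqi (\<lambda>x. g x - h x)"
  using sqi_add[of g "\<lambda>x. (-1) * h x"] sqi_cmult[of h "-1"] by simp

lemma sqi_cont: "continuous_on {0..pi} g \<Longrightarrow> sqi g"
  unfolding sqi_def by (auto intro!: integrable_continuous_real continuous_intros)

lemma sqi_sq_nonneg: "sqi g \<Longrightarrow> 0 \<le> integral {0..pi} (\<lambda>x. (g x)^2)"
  unfolding sqi_def by (intro integral_nonneg) auto

lemma quad_nonneg_disc:
  fixes A B C :: real
  assumes "\<And>r. 0 \<le> A + 2 * r * B + r^2 * C"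
  shows "B^2 \<le> A * C"
proof (cases "C = 0")
  case True
  have "B = 0"
  proof (rule ccontr)
    assume "B \<noteq> 0"
    have "0 \<le> A + 2 * (- (\<bar>A\<bar> + 1) / B) * B" using assms[of "- (\<bar>A\<bar> + 1) / B"] True by simp
    also have "\<dots> = A - 2 * (\<bar>A\<bar> + 1)" using \<open>B \<noteq> 0\<close> by (simp add: field_simps)
    finally show False by (cases "A \<ge> 0") auto
  qed
  then show ?thesis using True by simp
next
  case False
  have C0: "C \<ge> 0"
  proof (rule ccontr)
    assume "\<not> C \<ge> 0"
    hence Cn: "C < 0" by simp
    define r where "r = sqrt ((\<bar>A\<bar> + 1) / (- C))"
    have "(\<bar>A\<bar> + 1) / (- C) \<ge> 0" using Cn by (intro divide_nonneg_pos) auto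
    hence r2: "r^2 = (\<bar>A\<bar> + 1) / (- C)" unfolding r_def by simp
    have "0 \<le> (A + 2 * r * B + r^2 * C) + (A + 2 * (-r) * B + (-r)^2 * C)"
      using assms[of r] assms[of "-r"] by linarith
    also have "\<dots> = 2 * A + 2 * (r^2 * C)" by (simp add: power2_eq_square algebra_simps)
    also have "r^2 * C = - (\<bar>A\<bar> + 1)" using r2 Cn by (simp add: field_simps)
    finally show False by (cases "A \<ge> 0") auto
  qed
  with False have Cp: "C > 0" by simp
  have "0 \<le> A + 2 * (-B/C) * B + (-B/C)^2 * C" by (rule assms)
  also have "\<dots> = A - B^2 / C" using Cp by (simp add: field_simps power2_eq_square)
  finally have "B^2 / C \<le> A" by simp
  thus ?thesis using Cp by (simp add: field_simps)
qed

lemma sqi_CS: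
  assumes "sqi g" "sqi h"
  shows "(integral {0..pi} (\<lambda>x. g x * h x))^2 \<le>
          integral {0..pi} (\<lambda>x. (g x)^2) * integral {0..pi} (\<lambda>x. (h x)^2)"
proof (rule quad_nonneg_disc)
  fix r :: real
  have gh: "(\<lambda>x. g x * h x) integrable_on {0..pi}" by (rule sqi_mult_int[OF assms])
  have i1: "(\<lambda>x. (g x)^2) integrable_on {0..pi}" "(\<lambda>x. (h x)^2) integrable_on {0..pi}"
    using assms unfolding sqi_def by auto
  have "0 \<le> integral {0..pi} (\<lambda>x. (g x + r * h x)^2)"
    by (intro integral_nonneg) (use sqi_add[OF assms(1) sqi_cmult[OF assms(2)]] in \<open>auto simp: sqi_def\<close>)
  also have "(\<lambda>x. (g x + r * h x)^2) = (\<lambda>x. (g x)^2 + 2 * r * (g x * h x) + r^2 * (h x)^2)"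
    by (auto simp: power2_eq_square algebra_simps)
  also have "integral {0..pi} \<dots> = integral {0..pi} (\<lambda>x. (g x)^2) + 2 * r * integral {0..pi} (\<lambda>x. g x * h x)
        + r^2 * integral {0..pi} (\<lambda>x. (h x)^2)"
    using gh i1 by (simp add: integral_add integrable_add int_cmul)
  finally show "0 \<le> integral {0..pi} (\<lambda>x. (g x)^2) + 2 * r * integral {0..pi} (\<lambda>x. g x * h x)
        + r^2 * integral {0..pi} (\<lambda>x. (h x)^2)" .
qed

definition nrm :: "(real \<Rightarrow> real) \<Rightarrow> real" where
  "nrm g = sqrt (integral {0..pi} (\<lambda>x. (g x)^2))"

lemma integral_sq_nonneg: "0 \<le> integral S (\<lambda>x. (g x)^2)" for g :: "real \<Rightarrow> real"
  by (cases "(\<lambda>x. (g x)^2) integrable_on S") (auto intro: integral_nonneg simp: not_integrable_integral)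

lemma nrm_nonneg: "nrm g \<ge> 0"
  unfolding nrm_def using integral_sq_nonneg by simp

lemma sqi_nrm_sq: assumes "sqi g" shows "(nrm g)^2 = integral {0..pi} (\<lambda>x. (g x)^2)"
  unfolding nrm_def using sqi_sq_nonneg[OF assms] by simp

lemma sqi_inner_le: 
  assumes "sqi g" "sqi h"
  shows "\<bar>integral {0..pi} (\<lambda>x. g x * h x)\<bar> \<le> nrm g * nrm h"
proof -
  define X where "X = integral {0..pi} (\<lambda>x. g x * h x)"
  have "X^2 \<le> (nrm g)^2 * (nrm h)^2"
    unfolding X_def using sqi_CS[OF assms] sqi_nrm_sq[OF assms(1)] sqi_nrm_sq[OF assms(2)]
    by simp
  also have "\<dots> = (nrm g * nrm h)^2" by (rule power_mult_distrib[symmetric])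
  finally have "\<bar>X\<bar>^2 \<le> (nrm g * nrm h)^2" by simp
  moreover have "0 \<le> nrm g * nrm h" using nrm_nonneg by simp
  ultimately have "\<bar>X\<bar> \<le> nrm g * nrm h" by (rule power2_le_imp_le)
  then show ?thesis unfolding X_def .
qed

lemma sqi_triangle:
  assumes "sqi g" "sqi h"
  shows "nrm (\<lambda>x. g x + h x) \<le> nrm g + nrm h"
proof -
  have gh: "(\<lambda>x. g x * h x) integrable_on {0..pi}" by (rule sqi_mult_int[OF assms])
  have i1: "(\<lambda>x. (g x)^2) integrable_on {0..pi}" "(\<lambda>x. (h x)^2) integrable_on {0..pi}"
    using assms unfolding sqi_def by auto
  have "(nrm (\<lambda>x. g x + h x))^2 = integral {0..pi} (\<lambda>x. (g x)^2 + 2 * (g x * h x) + (h x)^2)"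
    using sqi_nrm_sq[OF sqi_add[OF assms]] by (simp add: power2_eq_square algebra_simps)
  also have "\<dots> = (nrm g)^2 + 2 * integral {0..pi} (\<lambda>x. g x * h x) + (nrm h)^2"
    using gh i1 sqi_nrm_sq[OF assms(1)] sqi_nrm_sq[OF assms(2)]
    by (simp add: integral_add integrable_add int_cmul)
  also have "\<dots> \<le> (nrm g)^2 + 2 * (nrm g * nrm h) + (nrm h)^2"
    using sqi_inner_le[OF assms] by linarith
  also have "\<dots> = (nrm g + nrm h)^2" by (simp add: power2_eq_square algebra_simps)
  finally show ?thesis
    by (rule power2_le_imp_le) (simp add: nrm_nonneg add_nonneg_nonneg)
qed

lemma sqi_triangle_diff:
  assumes "sqi g" "sqi h" "sqi k"
  shows "nrm (\<lambda>x. g x - k x) \<le> nrm (\<lambda>x. g x - h x) + nrm (\<lambda>x. h x - k x)"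
  using sqi_triangle[OF sqi_diff[OF assms(1,2)] sqi_diff[OF assms(2,3)]] by simp

lemma nrm_minus_commute: "nrm (\<lambda>x. g x - h x) = nrm (\<lambda>x. h x - g x)"
  unfolding nrm_def by (simp add: power2_commute)

lemma ae_zero_of_indef:
  fixes h :: "real \<Rightarrow> real"
  assumes ai: "h absolutely_integrable_on {0..pi}"
    and z: "\<And>x. x \<in> {0..pi} \<Longrightarrow> integral {0..x} h = 0"
  shows "\<exists>N. negligible N \<and> (\<forall>x\<in>{0..pi} - N. h x = 0)"
proof -
  define H where "H x = indicator {0..pi} x * h x" for x
  have Hint: "integrable lebesgue H" using ai unfolding set_integrable_def H_def by simp
  have Hm: "H \<in> borel_measurable lebesgue" using Hint by auto
  obtain H' where H'm: "H' \<in> borel_measurable lborel" and ae: "AE x in lborel. H x = H' x"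
    using completion_ex_borel_measurable_real[OF Hm] by blast
  have H'm2: "H' \<in> borel_measurable borel" using H'm by simp
  have H'L: "H' \<in> borel_measurable lebesgue" by (rule measurable_completion[OF H'm])
  have aeL: "AE x in lebesgue. H x = H' x" using AE_completion[OF ae] .
  have "integrable lebesgue H'"
    by (rule integrable_cong_AE_imp[OF Hint _ aeL]) (rule measurable_completion[OF H'm])
  hence H'int: "integrable lborel H'" using integrable_completion[of H' lborel] H'm by simp
  have key: "(LINT y|lborel. indicator {..x} y * H' y) = 0" for x :: real
  proof -
    have "(LINT y|lborel. indicator {..x} y * H' y) = (LINT y|lebesgue. indicator {..x} y * H' y)"
      by (rule integral_completion[symmetric]) (use H'm in auto)
    also have "\<dots> = (LINT y|lebesgue. indicator {..x} y * H y)"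
      by (rule integral_cong_AE) (use aeL in \<open>auto intro!: borel_measurable_times Hm H'L borel_measurable_indicator\<close>)
    also have "\<dots> = (LINT y|lebesgue. indicator ({0..pi} \<inter> {..x}) y *\<^sub>R h y)"
      unfolding H_def by (rule Bochner_Integration.integral_cong) (auto simp: indicator_def)
    also have "\<dots> = integral ({0..pi} \<inter> {..x}) h"
    proof -
      have "set_integrable lebesgue ({0..pi} \<inter> {..x}) h"
        by (rule set_integrable_subset[OF ai]) auto
      then show ?thesis using set_lebesgue_integral_eq_integral(2) unfolding set_lebesgue_integral_def by metis
    qed
    also have "\<dots> = 0"
    proof (cases "x < 0")
      case True
      then have "{0..pi} \<inter> {..x} = {}" by auto
      then show ?thesis by simp
    next
      case False
      then have "{0..pi} \<inter> {..x} = {0..min x pi}" by auto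
      then show ?thesis using z[of "min x pi"] False by auto
    qed
    finally show ?thesis .
  qed
  define M1 where "M1 = density lborel (\<lambda>y. ennreal (H' y))"
  define M2 where "M2 = density lborel (\<lambda>y. ennreal (- H' y))"
  have fin1: "(\<integral>\<^sup>+y. ennreal (H' y) \<partial>lborel) \<noteq> \<infinity>" and fin2: "(\<integral>\<^sup>+y. ennreal (- H' y) \<partial>lborel) \<noteq> \<infinity>"
    using H'int unfolding real_integrable_def by auto
  have fbm1: "finite_borel_measure M1"
  proof (rule finite_borel_measure.intro)
    have "emeasure M1 UNIV = (\<integral>\<^sup>+y. ennreal (H' y) * indicator UNIV y \<partial>lborel)"
      unfolding M1_def by (rule emeasure_density) (use H'm in auto)
    also have "\<dots> = (\<integral>\<^sup>+y. ennreal (H' y) \<partial>lborel)" by simp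
    finally have "emeasure M1 (space M1) \<noteq> \<infinity>" using fin1 by (simp add: M1_def)
    then show "finite_measure M1" by (rule finite_measureI)
    show "finite_borel_measure_axioms M1" by unfold_locales (simp add: M1_def)
  qed
  have fbm2: "finite_borel_measure M2"
  proof (rule finite_borel_measure.intro)
    have "emeasure M2 UNIV = (\<integral>\<^sup>+y. ennreal (- H' y) * indicator UNIV y \<partial>lborel)"
      unfolding M2_def by (rule emeasure_density) (use H'm in auto)
    also have "\<dots> = (\<integral>\<^sup>+y. ennreal (- H' y) \<partial>lborel)" by simp
    finally have "emeasure M2 (space M2) \<noteq> \<infinity>" using fin2 by (simp add: M2_def)
    then show "finite_measure M2" by (rule finite_measureI)
    show "finite_borel_measure_axioms M2" by unfold_locales (simp add: M2_def)
  qed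
  have em: "emeasure M1 {..x} = emeasure M2 {..x}" for x :: real
  proof -
    define f where "f y = indicator {..x} y * H' y" for y
    have fint: "integrable lborel f" unfolding f_def
      using integrable_mult_indicator[of "{..x}" lborel H'] H'int by simp
    have fi1: "(\<integral>\<^sup>+y. ennreal (f y) \<partial>lborel) \<noteq> \<infinity>" and fi2: "(\<integral>\<^sup>+y. ennreal (- f y) \<partial>lborel) \<noteq> \<infinity>"
      using fint unfolding real_integrable_def by auto
    have "enn2real (\<integral>\<^sup>+y. ennreal (f y) \<partial>lborel) - enn2real (\<integral>\<^sup>+y. ennreal (- f y) \<partial>lborel) = 0"
      using key[of x] real_lebesgue_integral_def[OF fint] unfolding f_def by simp
    hence eq: "(\<integral>\<^sup>+y. ennreal (f y) \<partial>lborel) = (\<integral>\<^sup>+y. ennreal (- f y) \<partial>lborel)"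
    proof -
      define X where "X = (\<integral>\<^sup>+y. ennreal (f y) \<partial>lborel)"
      define Y where "Y = (\<integral>\<^sup>+y. ennreal (- f y) \<partial>lborel)"
      have "X = ennreal (enn2real X)" by (rule ennreal_enn2real[symmetric]) (use fi1 in \<open>simp add: X_def less_top\<close>)
      also have "enn2real X = enn2real Y" using \<open>enn2real _ - enn2real _ = 0\<close> unfolding X_def Y_def by simp
      also have "ennreal (enn2real Y) = Y" by (rule ennreal_enn2real) (use fi2 in \<open>simp add: Y_def less_top\<close>)
      finally show ?thesis unfolding X_def Y_def .
    qed
    have "emeasure M1 {..x} = (\<integral>\<^sup>+y. ennreal (H' y) * indicator {..x} y \<partial>lborel)"
      unfolding M1_def by (rule emeasure_density) (use H'm in auto)
    also have "\<dots> = (\<integral>\<^sup>+y. ennreal (f y) \<partial>lborel)"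
      unfolding f_def by (rule nn_integral_cong) (auto simp: indicator_def)
    also have "\<dots> = (\<integral>\<^sup>+y. ennreal (- f y) \<partial>lborel)" by (rule eq)
    also have "\<dots> = (\<integral>\<^sup>+y. ennreal (- H' y) * indicator {..x} y \<partial>lborel)"
      unfolding f_def by (rule nn_integral_cong) (auto simp: indicator_def)
    also have "\<dots> = emeasure M2 {..x}"
      unfolding M2_def by (rule emeasure_density[symmetric]) (use H'm in auto)
    finally show ?thesis .
  qed
  have "cdf M1 = cdf M2"
    using em unfolding cdf_def measure_def by auto
  hence "M1 = M2" by (rule cdf_unique'[OF fbm1 fbm2])
  hence "AE y in lborel. ennreal (H' y) = ennreal (- H' y)"
    unfolding M1_def M2_def
    by (subst (asm) finite_density_unique) (use H'm fin1 in auto)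
  hence "AE y in lborel. H' y = 0"
    by (rule eventually_mono) (smt (verit) ennreal_eq_0_iff ennreal_neg)
  with ae have "AE y in lborel. H y = 0" by eventually_elim auto
  hence "AE y in lebesgue. H y = 0" by (rule AE_completion)
  then obtain N where N: "{y \<in> space lebesgue. \<not> H y = 0} \<subseteq> N" "emeasure lebesgue N = 0" "N \<in> sets lebesgue"
    by (rule AE_E)
  have "N \<in> null_sets lebesgue" by (rule null_setsI[OF N(2) N(3)])
  hence "negligible N" using negligible_iff_null_sets by blast
  moreover have "\<forall>x\<in>{0..pi} - N. h x = 0"
  proof
    fix x assume x: "x \<in> {0..pi} - N"
    hence "H x = 0" using N(1) by auto
    thus "h x = 0" using x unfolding H_def by simp
  qed
  ultimately show ?thesis by blast
qed

lemma sqi_abs_int: assumes "sqi g" shows "g absolutely_integrable_on {0..pi}"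
proof (rule absolutely_integrable_integrable_bound)
  show "norm (g x) \<le> (1 + (g x)^2) / 2" for x
  proof -
    have "0 \<le> (\<bar>g x\<bar> - 1)^2" by simp
    thus ?thesis by (simp add: power2_eq_square algebra_simps)
  qed
  show "g integrable_on {0..pi}" using assms unfolding sqi_def by auto
  show "(\<lambda>x. (1 + (g x)^2) / 2) integrable_on {0..pi}"
    using assms unfolding sqi_def by (intro int_divide integrable_add) auto
qed

lemma h10_rep_sqi: "h10_rep u g \<Longrightarrow> sqi g"
  unfolding h10_rep_def sqi_def by auto

lemma h10_rep_ae:
  assumes "h10_rep u g" "h10_rep u g'"
  shows "\<exists>N. negligible N \<and> (\<forall>x\<in>{0..pi} - N. g x = g' x)"
proof -
  have sg: "sqi g" "sqi g'" using assms h10_rep_sqi by auto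
  have ai: "(\<lambda>x. g x - g' x) absolutely_integrable_on {0..pi}"
    by (rule sqi_abs_int[OF sqi_diff[OF sg]])
  have "integral {0..x} (\<lambda>x. g x - g' x) = 0" if x: "x \<in> {0..pi}" for x
  proof -
    have i: "g integrable_on {0..x}" "g' integrable_on {0..x}"
      using assms x unfolding h10_rep_def by (auto intro: integrable_subinterval_real)
    have "integral {0..x} (\<lambda>x. g x - g' x) = integral {0..x} g - integral {0..x} g'"
      by (rule integral_diff[OF i])
    also have "\<dots> = u x - u x" using assms x unfolding h10_rep_def by auto
    finally show ?thesis by simp
  qed
  from ae_zero_of_indef[OF ai this] show ?thesis by auto
qed

lemma h10_deriv_rep: assumes "h10 u" shows "h10_rep u (h10_deriv u)"
  using assms unfolding h10_def h10_deriv_def by (rule someI_ex)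

lemma h10_deriv_ae:
  assumes "h10_rep u g"
  shows "\<exists>N. negligible N \<and> (\<forall>x\<in>{0..pi} - N. h10_deriv u x = g x)"
  using h10_rep_ae[OF h10_deriv_rep assms] assms unfolding h10_def by blast

lemma h10_sq_rep:
  assumes "h10_rep u g"
  shows "h10_sq u = integral {0..pi} (\<lambda>x. (g x)^2)"
proof -
  obtain N where N: "negligible N" "\<forall>x\<in>{0..pi} - N. h10_deriv u x = g x"
    using h10_deriv_ae[OF assms] by blast
  show ?thesis unfolding h10_sq_def
    by (rule integral_spike[OF N(1)]) (use N(2) in auto)
qed

lemma h10_dist_rep:
  assumes "h10_rep u g" "h10_rep v k"
  shows "h10_dist u v = nrm (\<lambda>x. g x - k x)"
proof -
  obtain N where N: "negligible N" "\<forall>x\<in>{0..pi} - N. h10_deriv u x = g x"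
    using h10_deriv_ae[OF assms(1)] by blast
  obtain N' where N': "negligible N'" "\<forall>x\<in>{0..pi} - N'. h10_deriv v x = k x"
    using h10_deriv_ae[OF assms(2)] by blast
  show ?thesis unfolding h10_dist_def nrm_def
    by (rule arg_cong[where f=sqrt], rule integral_spike[OF negligible_Un[OF N(1) N'(1)]]) (use N(2) N'(2) in auto)
qed

lemma h10_rep_cong: "(\<forall>x\<in>{0..pi}. u x = v x) \<Longrightarrow> h10_rep u g = h10_rep v g"
  unfolding h10_rep_def by auto

lemma h10_rep_classical:
  assumes d: "\<forall>x\<in>{0..pi}. (u has_real_derivative ux x) (at x within {0..pi})"
    and c: "continuous_on {0..pi} ux" and u0: "u 0 = 0" and upi: "u pi = 0"
  shows "h10_rep u ux"
  unfolding h10_rep_def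
proof (intro conjI ballI)
  show "ux integrable_on {0..pi}" using c by (rule integrable_continuous_real)
  show "(\<lambda>x. (ux x)^2) integrable_on {0..pi}" using c by (intro integrable_continuous_real continuous_intros)
  show "u pi = 0" by (rule upi)
  fix x assume x: "x \<in> {0..pi}"
  have "(ux has_integral (u x - u 0)) {0..x}"
  proof (rule fundamental_theorem_of_calculus)
    show "0 \<le> x" using x by auto
    fix y assume y: "y \<in> {0..x}"
    have "(u has_real_derivative ux y) (at y within {0..pi})" using d y x by auto
    hence "(u has_real_derivative ux y) (at y within {0..x})"
      by (rule DERIV_subset) (use x in auto)
    thus "(u has_vector_derivative ux y) (at y within {0..x})"
      by (simp add: has_real_derivative_iff_has_vector_derivative)
  qed
  thus "u x = integral {0..x} ux" using u0 by (simp add: integral_unique)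
qed

lemma h10_rep_sup:
  assumes "h10_rep u g" "x \<in> {0..pi}"
  shows "(u x)^2 \<le> pi * integral {0..pi} (\<lambda>y. (g y)^2)"
proof -
  define chi where "chi y = (if y \<in> {0..x} then 1 else (0::real))" for y
  have sg: "sqi g" using assms h10_rep_sqi by auto
  have schi: "sqi chi"
  proof -
    have "(\<lambda>y. if y \<in> {0..x} then (1::real) else 0) integrable_on {0..pi}"
      by (subst integrable_restrict_Int) auto
    moreover have "(\<lambda>y. (chi y)^2) = chi" unfolding chi_def by auto
    ultimately show ?thesis unfolding sqi_def chi_def by auto
  qed
  have "u x = integral {0..x} g" using assms unfolding h10_rep_def by auto
  also have "\<dots> = integral {0..pi} (\<lambda>y. if y \<in> {0..x} then g y else 0)"
    using assms(2) by (subst Henstock_Kurzweil_Integration.integral_restrict_Int) (simp add: Int_absorb2)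
  also have "\<dots> = integral {0..pi} (\<lambda>y. chi y * g y)"
    unfolding chi_def by (rule integral_cong) auto
  finally have ux: "u x = integral {0..pi} (\<lambda>y. chi y * g y)" .
  have ichi: "integral {0..pi} (\<lambda>y. (chi y)^2) = x"
  proof -
    have "integral {0..pi} (\<lambda>y. (chi y)^2) = integral {0..pi} (\<lambda>y. if y \<in> {0..x} then 1 else 0)"
      unfolding chi_def by (rule integral_cong) auto
    also have "\<dots> = integral {0..x} (\<lambda>y. 1)"
      using assms(2) by (subst Henstock_Kurzweil_Integration.integral_restrict_Int) (simp add: Int_absorb2)
    also have "\<dots> = x" using assms(2) by simp
    finally show ?thesis .
  qed
  have "(u x)^2 \<le> integral {0..pi} (\<lambda>y. (chi y)^2) * integral {0..pi} (\<lambda>y. (g y)^2)"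
    unfolding ux by (rule sqi_CS[OF schi sg])
  also have "\<dots> \<le> pi * integral {0..pi} (\<lambda>y. (g y)^2)"
    unfolding ichi using assms(2) sqi_sq_nonneg[OF sg] by (intro mult_right_mono) auto
  finally show ?thesis .
qed

lemma ibp0:
  assumes dF: "\<And>x. x \<in> {0..pi} \<Longrightarrow> (F has_real_derivative f x) (at x within {0..pi})"
    and dG: "\<And>x. x \<in> {0..pi} \<Longrightarrow> (G has_real_derivative g x) (at x within {0..pi})"
    and cf: "continuous_on {0..pi} f" and cg: "continuous_on {0..pi} g"
    and b0: "F 0 * G 0 = 0" and bpi: "F pi * G pi = 0"
  shows "integral {0..pi} (\<lambda>x. f x * G x) = - integral {0..pi} (\<lambda>x. F x * g x)"
proof -
  have cF: "continuous_on {0..pi} F" by (rule DERIV_continuous_on[OF dF])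
  have cG: "continuous_on {0..pi} G" by (rule DERIV_continuous_on[OF dG])
  have "((\<lambda>x. f x * G x + F x * g x) has_integral (F pi * G pi - F 0 * G 0)) {0..pi}"
  proof (rule fundamental_theorem_of_calculus)
    fix x assume x: "x \<in> {0..pi}"
    have "((\<lambda>x. F x * G x) has_real_derivative (f x * G x + g x * F x)) (at x within {0..pi})"
      by (rule DERIV_mult[OF dF[OF x] dG[OF x]])
    thus "((\<lambda>x. F x * G x) has_vector_derivative (f x * G x + F x * g x)) (at x within {0..pi})"
      by (simp add: has_real_derivative_iff_has_vector_derivative mult.commute)
  qed simp
  hence "integral {0..pi} (\<lambda>x. f x * G x + F x * g x) = 0" using b0 bpi by (simp add: integral_unique)
  moreover have "integral {0..pi} (\<lambda>x. f x * G x + F x * g x) =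
      integral {0..pi} (\<lambda>x. f x * G x) + integral {0..pi} (\<lambda>x. F x * g x)"
    by (rule integral_add) (auto intro!: integrable_continuous_real continuous_intros cf cg cF cG)
  ultimately show ?thesis by simp
qed

lemma cont_slice:
  assumes "continuous_on ({0<..} \<times> {0..pi}) (\<lambda>(s,x). h s x)" "s > 0"
  shows "continuous_on {0..pi} (h s)"
proof -
  have "continuous_on {0..pi} (\<lambda>x. (\<lambda>(s,x). h s x) (s, x))"
    by (rule continuous_on_compose2[OF assms(1)]) (use assms(2) in \<open>auto intro!: continuous_intros\<close>)
  thus ?thesis by simp
qed

lemma unif_cont_pair:
  fixes h :: "real \<Rightarrow> real \<Rightarrow> real" and a b e :: real
  assumes "continuous_on ({0<..} \<times> {0..pi}) (\<lambda>(s,x). h s x)" "a > 0" "a \<le> b" "e > 0"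
  shows "\<exists>d>0. \<forall>s\<in>{a..b}. \<forall>s'\<in>{a..b}. \<forall>x\<in>{0..pi}. \<bar>s - s'\<bar> < d \<longrightarrow> \<bar>h s x - h s' x\<bar> < e"
proof -
  have "uniformly_continuous_on ({a..b} \<times> {0..pi}) (\<lambda>(s,x). h s x)"
    by (rule compact_uniformly_continuous[OF continuous_on_subset[OF assms(1)]])
       (use assms(2) in \<open>auto intro!: compact_Times compact_Icc\<close>)
  then obtain d where d: "d > 0" "\<forall>p\<in>{a..b} \<times> {0..pi}. \<forall>p'\<in>{a..b} \<times> {0..pi}. dist p' p < d \<longrightarrow>
       dist ((\<lambda>(s,x). h s x) p') ((\<lambda>(s,x). h s x) p) < e"
    unfolding uniformly_continuous_on_def using assms(4) by metis
  show ?thesis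
  proof (intro exI[of _ d] conjI ballI impI)
    fix s s' x assume *: "s \<in> {a..b}" "s' \<in> {a..b}" "x \<in> {0..pi}" "\<bar>s - s'\<bar> < d"
    have "dist (s, x) (s', x) < d" using *(4) by (simp add: dist_Pair_Pair dist_real_def)
    then show "\<bar>h s x - h s' x\<bar> < e" using d(2) *(1-3) by (fastforce simp: dist_real_def)
  qed (rule d(1))
qed

lemma bound_pair:
  fixes h :: "real \<Rightarrow> real \<Rightarrow> real" and a b :: real
  assumes "continuous_on ({0<..} \<times> {0..pi}) (\<lambda>(s,x). h s x)" "a > 0"
  shows "\<exists>B>0. \<forall>s\<in>{a..b}. \<forall>x\<in>{0..pi}. \<bar>h s x\<bar> \<le> B"
proof -
  have "compact ((\<lambda>(s,x). h s x) ` ({a..b} \<times> {0..pi}))"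
    by (rule compact_continuous_image[OF continuous_on_subset[OF assms(1)]])
       (use assms(2) in \<open>auto intro!: compact_Times compact_Icc\<close>)
  then obtain B where B: "B > 0" "\<forall>y\<in>(\<lambda>(s,x). h s x) ` ({a..b} \<times> {0..pi}). norm y \<le> B"
    using compact_imp_bounded bounded_pos by metis
  show ?thesis using B by (intro exI[of _ B]) force
qed

lemma mvt_time:
  assumes D1: "\<And>s. s > 0 \<Longrightarrow> ((\<lambda>s. w s) has_real_derivative wt s) (at s)"
    and s: "s > 0" and t: "t > 0" and ne: "s \<noteq> t"
  shows "\<exists>z. min s t < z \<and> z < max s t \<and> w s - w t = (s - t) * wt z"
proof (cases "s < t")
  case True
  obtain z where "s < z" "z < t" "w t - w s = (t - s) * wt z"
    using MVT2[OF True, of w wt] D1 s by force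
  then show ?thesis using True by (intro exI[of _ z]) (auto simp: algebra_simps)
next
  case False
  hence lt: "t < s" using ne by simp
  obtain z where "t < z" "z < s" "w s - w t = (s - t) * wt z"
    using MVT2[OF lt, of w wt] D1 t by force
  then show ?thesis using lt by (intro exI[of _ z]) auto
qed

lemma energy_deriv:
  fixes w wt wx wxx :: "real \<Rightarrow> real \<Rightarrow> real" and t :: real
  assumes t: "t > 0"
  and D1: "\<And>s x. s > 0 \<Longrightarrow> x \<in> {0..pi} \<Longrightarrow> ((\<lambda>s. w s x) has_real_derivative wt s x) (at s)"
  and D2: "\<And>s x. s > 0 \<Longrightarrow> x \<in> {0..pi} \<Longrightarrow> ((\<lambda>y. w s y) has_real_derivative wx s x) (at x within {0..pi})"
  and D3: "\<And>s x. s > 0 \<Longrightarrow> x \<in> {0..pi} \<Longrightarrow> ((\<lambda>y. wx s y) has_real_derivative wxx s x) (at x within {0..pi})"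
  and Ct: "continuous_on ({0<..} \<times> {0..pi}) (\<lambda>(s,x). wt s x)"
  and Cxx: "continuous_on ({0<..} \<times> {0..pi}) (\<lambda>(s,x). wxx s x)"
  and B0: "\<And>s. s > 0 \<Longrightarrow> w s 0 = 0" and Bpi: "\<And>s. s > 0 \<Longrightarrow> w s pi = 0"
  shows "((\<lambda>s. integral {0..pi} (\<lambda>x. (wx s x)^2)) has_real_derivative
           (-2 * integral {0..pi} (\<lambda>x. wt t x * wxx t x))) (at t)"
proof -
  have cw: "continuous_on {0..pi} (w s)" if "s > 0" for s
    using DERIV_continuous_on[of "{0..pi}" "w s" "wx s"] D2 that by auto
  have cwx: "continuous_on {0..pi} (wx s)" if "s > 0" for s
    using DERIV_continuous_on[of "{0..pi}" "wx s" "wxx s"] D3 that by auto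
  have cwxx: "continuous_on {0..pi} (wxx s)" if "s > 0" for s by (rule cont_slice[OF Cxx that])
  have cwt: "continuous_on {0..pi} (wt s)" if "s > 0" for s by (rule cont_slice[OF Ct that])
  define E where "E s = integral {0..pi} (\<lambda>x. (wx s x)^2)" for s
  have ibp: "E s - E t = - integral {0..pi} (\<lambda>x. (w s x - w t x) * (wxx s x + wxx t x))"
    if s: "s > 0" for s
  proof -
    have "E s - E t = integral {0..pi} (\<lambda>x. (wx s x)^2 - (wx t x)^2)"
      unfolding E_def
      by (rule integral_diff[symmetric]) (auto intro!: integrable_continuous_real continuous_intros cwx s t)
    also have "\<dots> = integral {0..pi} (\<lambda>x. (wx s x - wx t x) * (wx s x + wx t x))"
      by (rule integral_cong) (simp add: power2_eq_square algebra_simps)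
    also have "\<dots> = - integral {0..pi} (\<lambda>x. (w s x - w t x) * (wxx s x + wxx t x))"
    proof (rule ibp0)
      fix x assume x: "x \<in> {0..pi}"
      show "((\<lambda>x. w s x - w t x) has_real_derivative wx s x - wx t x) (at x within {0..pi})"
        by (rule DERIV_diff[OF D2[OF s x] D2[OF t x]])
      show "((\<lambda>x. wx s x + wx t x) has_real_derivative wxx s x + wxx t x) (at x within {0..pi})"
        by (rule DERIV_add[OF D3[OF s x] D3[OF t x]])
    next
      show "continuous_on {0..pi} (\<lambda>x. wx s x - wx t x)"
        by (auto intro!: continuous_intros cwx s t)
      show "continuous_on {0..pi} (\<lambda>x. wxx s x + wxx t x)"
        by (auto intro!: continuous_intros cwxx s t)
      show "(w s 0 - w t 0) * (wx s 0 + wx t 0) = 0" using B0 s t by simp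
      show "(w s pi - w t pi) * (wx s pi + wx t pi) = 0" using Bpi s t by simp
    qed
    finally show ?thesis .
  qed
  obtain Bt where Bt: "Bt > 0" "\<forall>s\<in>{t/2..2*t}. \<forall>x\<in>{0..pi}. \<bar>wt s x\<bar> \<le> Bt"
    using bound_pair[OF Ct, of "t/2" "2*t"] t by auto
  obtain Bx where Bx: "Bx > 0" "\<forall>s\<in>{t/2..2*t}. \<forall>x\<in>{0..pi}. \<bar>wxx s x\<bar> \<le> Bx"
    using bound_pair[OF Cxx, of "t/2" "2*t"] t by auto
  have "((\<lambda>s. (E s - E t) / (s - t)) \<longlongrightarrow> -2 * integral {0..pi} (\<lambda>x. wt t x * wxx t x)) (at t)"
    unfolding LIM_eq
  proof (intro allI impI)
    fix r :: real assume r: "r > 0"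
    define \<eta> where "\<eta> = r / (pi * (2 * Bx + Bt) + 1)"
    have pos: "pi * (2 * Bx + Bt) + 1 > 0" using Bx Bt by (simp add: add_pos_nonneg)
    have eta: "\<eta> > 0" unfolding \<eta>_def using r pos by simp
    have eta2: "pi * (\<eta> * (2 * Bx + Bt)) < r"
    proof -
      have "pi * (\<eta> * (2 * Bx + Bt)) = r * (pi * (2 * Bx + Bt)) / (pi * (2 * Bx + Bt) + 1)"
        unfolding \<eta>_def by (simp add: field_simps)
      also have "\<dots> < r" using r pos by (simp add: field_simps)
      finally show ?thesis .
    qed
    obtain d1 where d1: "d1 > 0" "\<forall>s\<in>{t/2..2*t}. \<forall>s'\<in>{t/2..2*t}. \<forall>x\<in>{0..pi}. \<bar>s - s'\<bar> < d1 \<longrightarrow> \<bar>wt s x - wt s' x\<bar> < \<eta>"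
      using unif_cont_pair[OF Ct, of "t/2" "2*t" \<eta>] t eta by auto
    obtain d2 where d2: "d2 > 0" "\<forall>s\<in>{t/2..2*t}. \<forall>s'\<in>{t/2..2*t}. \<forall>x\<in>{0..pi}. \<bar>s - s'\<bar> < d2 \<longrightarrow> \<bar>wxx s x - wxx s' x\<bar> < \<eta>"
      using unif_cont_pair[OF Cxx, of "t/2" "2*t" \<eta>] t eta by auto
    show "\<exists>d>0. \<forall>s. s \<noteq> t \<and> norm (s - t) < d \<longrightarrow>
            norm ((E s - E t) / (s - t) - -2 * integral {0..pi} (\<lambda>x. wt t x * wxx t x)) < r"
    proof (intro exI[of _ "min (t/2) (min d1 d2)"] conjI allI impI)
      show "0 < min (t/2) (min d1 d2)" using t d1 d2 by simp
      fix s assume "s \<noteq> t \<and> norm (s - t) < min (t/2) (min d1 d2)"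
      hence ne: "s \<noteq> t" and sd: "\<bar>s - t\<bar> < t/2" "\<bar>s - t\<bar> < d1" "\<bar>s - t\<bar> < d2" by auto
      have "t/2 < s" "s < 3*t/2" using sd(1) abs_less_iff[of "s-t" "t/2"] by auto
      hence s: "s > 0" "s \<in> {t/2..2*t}" using t by auto
      have tI: "t \<in> {t/2..2*t}" using t by auto
      define Ds where "Ds x = (w s x - w t x) / (s - t)" for x
      define G where "G x = wxx s x + wxx t x" for x
      have cDs: "continuous_on {0..pi} Ds" unfolding Ds_def
        using ne by (auto intro!: continuous_intros cw s t)
      have cG: "continuous_on {0..pi} G" unfolding G_def
        by (auto intro!: continuous_intros cwxx s t)
      have pw: "\<bar>Ds x * G x - 2 * (wt t x * wxx t x)\<bar> \<le> \<eta> * (2 * Bx + Bt)" if x: "x \<in> {0..pi}" for x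
      proof -
        obtain z where z: "min s t < z" "z < max s t" "w s x - w t x = (s - t) * wt z x"
          using mvt_time[of "\<lambda>s. w s x" "\<lambda>s. wt s x" s t] D1[OF _ x] s(1) t ne by blast
        have Dz: "Ds x = wt z x" unfolding Ds_def using z(3) ne by simp
        have zI: "z \<in> {t/2..2*t}" using z s(2) tI by (auto simp: min_def max_def split: if_splits)
        have zd: "\<bar>z - t\<bar> < d1" using z sd(2) by (auto simp: min_def max_def split: if_splits)
        have e1: "\<bar>Ds x - wt t x\<bar> < \<eta>" unfolding Dz using d1(2) zI tI x zd by blast
        have e2: "\<bar>wxx s x - wxx t x\<bar> < \<eta>" using d2(2) s(2) tI x sd(3) by blast
        have bG: "\<bar>G x\<bar> \<le> 2 * Bx" unfolding G_def using Bx(2) s(2) tI x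
          by (smt (verit, best))
        have bt: "\<bar>wt t x\<bar> \<le> Bt" using Bt(2) tI x by blast
        have "Ds x * G x - 2 * (wt t x * wxx t x) = (Ds x - wt t x) * G x + wt t x * (wxx s x - wxx t x)"
          unfolding G_def by (simp add: algebra_simps)
        also have "\<bar>\<dots>\<bar> \<le> \<bar>Ds x - wt t x\<bar> * \<bar>G x\<bar> + \<bar>wt t x\<bar> * \<bar>wxx s x - wxx t x\<bar>"
          by (metis abs_mult abs_triangle_ineq)
        also have "\<dots> \<le> \<eta> * (2 * Bx) + Bt * \<eta>"
          using e1 e2 bG bt by (intro add_mono mult_mono) auto
        finally show ?thesis by (simp add: algebra_simps)
      qed
      have q: "(E s - E t) / (s - t) = - integral {0..pi} (\<lambda>x. Ds x * G x)"
      proof -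
        have "(E s - E t) / (s - t) = (1 / (s - t)) * (- integral {0..pi} (\<lambda>x. (w s x - w t x) * G x))"
          using ibp[OF s(1)] unfolding G_def by simp
        also have "\<dots> = - ((1 / (s - t)) * integral {0..pi} (\<lambda>x. (w s x - w t x) * G x))" by simp
        also have "(1 / (s - t)) * integral {0..pi} (\<lambda>x. (w s x - w t x) * G x) =
            integral {0..pi} (\<lambda>x. (1 / (s - t)) * ((w s x - w t x) * G x))"
          by (rule integral_mult) (auto intro!: integrable_continuous_real continuous_intros cw cG s t)
        also have "\<dots> = integral {0..pi} (\<lambda>x. Ds x * G x)"
          unfolding Ds_def by (rule integral_cong) simp
        finally show ?thesis .
      qed
      have "norm ((E s - E t) / (s - t) - -2 * integral {0..pi} (\<lambda>x. wt t x * wxx t x))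
          = \<bar>integral {0..pi} (\<lambda>x. Ds x * G x - 2 * (wt t x * wxx t x))\<bar>"
      proof -
        have i1: "(\<lambda>x. Ds x * G x) integrable_on {0..pi}"
          by (auto intro!: integrable_continuous_real continuous_intros cDs cG)
        have i2: "(\<lambda>x. 2 * (wt t x * wxx t x)) integrable_on {0..pi}"
          by (auto intro!: integrable_continuous_real continuous_intros cwt cwxx t)
        have "integral {0..pi} (\<lambda>x. Ds x * G x - 2 * (wt t x * wxx t x)) =
            integral {0..pi} (\<lambda>x. Ds x * G x) - integral {0..pi} (\<lambda>x. 2 * (wt t x * wxx t x))"
          by (rule integral_diff[OF i1 i2])
        also have "integral {0..pi} (\<lambda>x. 2 * (wt t x * wxx t x)) = 2 * integral {0..pi} (\<lambda>x. wt t x * wxx t x)"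
          by simp
        finally show ?thesis unfolding q by simp
      qed
      also have "\<dots> \<le> (\<eta> * (2 * Bx + Bt)) * (pi - 0)"
      proof -
        have "norm (integral {0..pi} (\<lambda>x. Ds x * G x - 2 * (wt t x * wxx t x))) \<le> (\<eta> * (2 * Bx + Bt)) * (pi - 0)"
          by (rule integral_bound) (auto intro!: continuous_intros cDs cG cwt cwxx t pw)
        thus ?thesis by simp
      qed
      also have "\<dots> < r" using eta2 by (simp add: algebra_simps)
      finally show "norm ((E s - E t) / (s - t) - -2 * integral {0..pi} (\<lambda>x. wt t x * wxx t x)) < r" .
    qed
  qed
  then show ?thesis unfolding has_field_derivative_iff E_def by simp
qed

lemma fprime_le1:
  fixes f' f'' :: "real \<Rightarrow> real"
  assumes d2: "\<forall>s. (f' has_real_derivative f'' s) (at s)"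
    and f1: "f' 0 = 1" and sgn: "\<forall>s. s \<noteq> 0 \<longrightarrow> s * f'' s < 0"
  shows "f' s \<le> 1"
proof (cases "s = 0")
  case True then show ?thesis using f1 by simp
next
  case False
  show ?thesis
  proof (cases "s > 0")
    case True
    obtain z where z: "0 < z" "z < s" "f' s - f' 0 = (s - 0) * f'' z"
      using MVT2[OF True, of f' f''] d2 by blast
    have "z * f'' z < 0" using sgn z by auto
    hence "f'' z < 0" using z(1) by (simp add: mult_less_0_iff)
    hence "(s - 0) * f'' z < 0" using True by (simp add: mult_pos_neg)
    then show ?thesis using z(3) f1 by simp
  next
    case False
    hence lt: "s < 0" using \<open>s \<noteq> 0\<close> by simp
    obtain z where z: "s < z" "z < 0" "f' 0 - f' s = (0 - s) * f'' z"
      using MVT2[OF lt, of f' f''] d2 by blast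
    have "z * f'' z < 0" using sgn z by auto
    hence "f'' z > 0" using z(2) by (simp add: mult_less_0_iff)
    hence "(0 - s) * f'' z > 0" using lt by (intro mult_pos_pos) auto
    then show ?thesis using z(3) f1 by simp
  qed
qed

lemma f_lip:
  fixes f f' :: "real \<Rightarrow> real"
  assumes d1: "\<forall>s. (f has_real_derivative f' s) (at s)"
    and cf': "continuous_on UNIV f'"
  shows "\<exists>K\<ge>0. \<forall>x y. \<bar>x\<bar> \<le> \<rho> \<longrightarrow> \<bar>y\<bar> \<le> \<rho> \<longrightarrow> \<bar>f x - f y\<bar> \<le> K * \<bar>x - y\<bar>"
proof -
  have "compact (f' ` {-\<rho>..\<rho>})"
    by (rule compact_continuous_image[OF continuous_on_subset[OF cf']]) auto
  then obtain K where K: "K > 0" "\<forall>y\<in>f' ` {-\<rho>..\<rho>}. norm y \<le> K"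
    using compact_imp_bounded bounded_pos by metis
  have main: "\<bar>f x - f y\<bar> \<le> K * \<bar>x - y\<bar>" if xy: "\<bar>x\<bar> \<le> \<rho>" "\<bar>y\<bar> \<le> \<rho>" "x < y" for x y
  proof -
    obtain z where z: "x < z" "z < y" "f y - f x = (y - x) * f' z"
      using MVT2[OF xy(3), of f f'] d1 by blast
    have "z \<in> {-\<rho>..\<rho>}" using z xy by auto
    hence "\<bar>f' z\<bar> \<le> K" using K(2) by auto
    hence "\<bar>f y - f x\<bar> \<le> \<bar>y - x\<bar> * K" unfolding z(3) abs_mult by (intro mult_left_mono) auto
    thus ?thesis by (simp add: abs_minus_commute mult.commute)
  qed
  show ?thesis
  proof (intro exI[of _ K] conjI allI impI)
    show "K \<ge> 0" using K by simp
    fix x y assume xy: "\<bar>x\<bar> \<le> \<rho>" "\<bar>y\<bar> \<le> \<rho>"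
    consider "x < y" | "x = y" | "y < x" by linarith
    then show "\<bar>f x - f y\<bar> \<le> K * \<bar>x - y\<bar>"
    proof cases
      case 1 then show ?thesis using main xy by blast
    next
      case 2 then show ?thesis by simp
    next
      case 3 then show ?thesis using main[of y x] xy by (simp add: abs_minus_commute)
    qed
  qed
qed

lemma young:
  fixes m a b :: real
  assumes "m > 0"
  shows "a * b \<le> (m / 2) * a^2 + b^2 / (2 * m)"
proof -
  have "0 \<le> (m * a - b)^2 / (2 * m)" using assms by simp
  also have "(m * a - b)^2 / (2 * m) = (m / 2) * a^2 - a * b + b^2 / (2 * m)"
    using assms by (simp add: field_simps power2_eq_square)
  finally show ?thesis by simp
qed

lemma integral_le_interior:
  fixes F G :: "real \<Rightarrow> real"
  assumes iF: "F integrable_on {0..pi}" and iG: "G integrable_on {0..pi}"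
    and le: "\<And>x. x \<in> {0<..<pi} \<Longrightarrow> F x \<le> G x"
  shows "integral {0..pi} F \<le> integral {0..pi} G"
proof -
  define F' where "F' x = (if x \<in> {0, pi} then G x else F x)" for x
  have neg: "negligible {0, pi::real}" by simp
  have eqF: "\<And>x. x \<in> {0..pi} - {0, pi} \<Longrightarrow> F' x = F x" unfolding F'_def by auto
  have iF': "F' integrable_on {0..pi}"
    by (rule integrable_spike[OF iF neg]) (use eqF in auto)
  have "integral {0..pi} F = integral {0..pi} F'"
    by (rule integral_spike[OF neg]) (use eqF in auto)
  also have "\<dots> \<le> integral {0..pi} G"
    by (rule integral_le[OF iF' iG]) (auto simp: F'_def le)
  finally show ?thesis .
qed

lemma integral_eq_interior:
  fixes F G :: "real \<Rightarrow> real"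
  assumes eq: "\<And>x. x \<in> {0<..<pi} \<Longrightarrow> F x = G x"
  shows "integral {0..pi} F = integral {0..pi} G"
  by (rule integral_spike[of "{0, pi}"]) (use eq in auto)

definition csol ::
  "(real \<Rightarrow> real) \<Rightarrow> real \<Rightarrow> (real \<Rightarrow> real) \<Rightarrow> (real \<Rightarrow> real \<Rightarrow> real) \<Rightarrow> (real \<Rightarrow> real \<Rightarrow> real)
     \<Rightarrow> (real \<Rightarrow> real \<Rightarrow> real) \<Rightarrow> (real \<Rightarrow> real \<Rightarrow> real) \<Rightarrow> bool" where
  "csol A lam f u ut ux uxx \<longleftrightarrow>
     (\<forall>t\<ge>0. h10 (u t)) \<and>
     (\<forall>t0\<ge>0. ((\<lambda>t. h10_dist (u t) (u t0)) \<longlongrightarrow> 0) (at t0 within {0..})) \<and>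
        continuous_on ({0<..} \<times> {0..pi}) (\<lambda>(t,x). ut t x) \<and>
        continuous_on ({0<..} \<times> {0..pi}) (\<lambda>(t,x). ux t x) \<and>
        continuous_on ({0<..} \<times> {0..pi}) (\<lambda>(t,x). uxx t x) \<and>
        (\<forall>t>0. \<forall>x\<in>{0..pi}.
            ((\<lambda>s. u s x) has_real_derivative ut t x) (at t) \<and>
            ((\<lambda>y. u t y) has_real_derivative ux t x) (at x within {0..pi}) \<and>
            ((\<lambda>y. ux t y) has_real_derivative uxx t x) (at x within {0..pi})) \<and>
        (\<forall>t>0. \<forall>x\<in>{0<..<pi}.
            ut t x = A (h10_sq (u t)) * uxx t x + lam * f (u t x))"

lemma is_solution_csol:
  assumes "is_solution A lam f u0 u"
  shows "\<exists>ut ux uxx. csol A lam f u ut ux uxx"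
  using assms unfolding is_solution_def csol_def by blast

lemma is_solution_init: "is_solution A lam f u0 u \<Longrightarrow> \<forall>x\<in>{0..pi}. u 0 x = u0 x"
  unfolding is_solution_def by blast

lemma h10_sq_nonneg: "h10_sq v \<ge> 0"
  unfolding h10_sq_def by (rule integral_sq_nonneg)

lemma sqrt_h10_sq: "sqrt (h10_sq v) = nrm (h10_deriv v)"
  unfolding h10_sq_def nrm_def ..

lemma h10_dist_nrm: "h10_dist v w = nrm (\<lambda>x. h10_deriv v x - h10_deriv w x)"
  unfolding h10_dist_def nrm_def ..

context
  fixes A :: "real \<Rightarrow> real" and lam :: real and f :: "real \<Rightarrow> real"
    and u ut ux uxx :: "real \<Rightarrow> real \<Rightarrow> real"
  assumes cs: "csol A lam f u ut ux uxx"
begin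

lemma cs_h10: "t \<ge> 0 \<Longrightarrow> h10 (u t)"
  using cs unfolding csol_def by blast

lemma cs_bd: assumes "t \<ge> 0" shows "u t 0 = 0" "u t pi = 0"
proof -
  obtain g where g: "h10_rep (u t) g" using cs_h10[OF assms] unfolding h10_def by blast
  then show "u t 0 = 0" "u t pi = 0" unfolding h10_rep_def by auto
qed

lemma cs_D1: "t > 0 \<Longrightarrow> x \<in> {0..pi} \<Longrightarrow> ((\<lambda>s. u s x) has_real_derivative ut t x) (at t)"
  using cs unfolding csol_def by blast
lemma cs_D2: "t > 0 \<Longrightarrow> x \<in> {0..pi} \<Longrightarrow> ((\<lambda>y. u t y) has_real_derivative ux t x) (at x within {0..pi})"
  using cs unfolding csol_def by blast
lemma cs_D3: "t > 0 \<Longrightarrow> x \<in> {0..pi} \<Longrightarrow> ((\<lambda>y. ux t y) has_real_derivative uxx t x) (at x within {0..pi})"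
  using cs unfolding csol_def by blast
lemma cs_Ct: "continuous_on ({0<..} \<times> {0..pi}) (\<lambda>(t,x). ut t x)"
  using cs unfolding csol_def by blast
lemma cs_Cxx: "continuous_on ({0<..} \<times> {0..pi}) (\<lambda>(t,x). uxx t x)"
  using cs unfolding csol_def by blast
lemma cs_pde: "t > 0 \<Longrightarrow> x \<in> {0<..<pi} \<Longrightarrow> ut t x = A (h10_sq (u t)) * uxx t x + lam * f (u t x)"
  using cs unfolding csol_def by blast
lemma cs_cont: "t0 \<ge> 0 \<Longrightarrow> ((\<lambda>t. h10_dist (u t) (u t0)) \<longlongrightarrow> 0) (at t0 within {0..})"
  using cs unfolding csol_def by blast

lemma cs_cu: "t > 0 \<Longrightarrow> continuous_on {0..pi} (u t)"
  using DERIV_continuous_on[of "{0..pi}" "u t" "ux t"] cs_D2 by auto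
lemma cs_cux: "t > 0 \<Longrightarrow> continuous_on {0..pi} (ux t)"
  using DERIV_continuous_on[of "{0..pi}" "ux t" "uxx t"] cs_D3 by auto
lemma cs_cuxx: "t > 0 \<Longrightarrow> continuous_on {0..pi} (uxx t)"
  by (rule cont_slice[OF cs_Cxx])
lemma cs_cut: "t > 0 \<Longrightarrow> continuous_on {0..pi} (ut t)"
  by (rule cont_slice[OF cs_Ct])

lemma cs_rep: "t > 0 \<Longrightarrow> h10_rep (u t) (ux t)"
  by (rule h10_rep_classical) (auto intro: cs_D2 cs_cux cs_bd)

lemma cs_X: "t > 0 \<Longrightarrow> h10_sq (u t) = integral {0..pi} (\<lambda>x. (ux t x)^2)"
  by (rule h10_sq_rep[OF cs_rep])

lemma cs_Xderiv:
  assumes t: "t > 0"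
  shows "((\<lambda>s. h10_sq (u s)) has_real_derivative (-2 * integral {0..pi} (\<lambda>x. ut t x * uxx t x))) (at t)"
proof (rule has_field_derivative_transform_within_open)
  show "((\<lambda>s. integral {0..pi} (\<lambda>x. (ux s x)^2)) has_real_derivative (-2 * integral {0..pi} (\<lambda>x. ut t x * uxx t x))) (at t)"
    by (rule energy_deriv[where w=u and wt=ut and wx=ux and wxx=uxx, OF t])
       (auto intro: cs_D1 cs_D2 cs_D3 cs_Ct cs_Cxx cs_bd)
  show "open {0::real<..}" by simp
  show "t \<in> {0<..}" using t by simp
  show "\<And>s. s \<in> {0<..} \<Longrightarrow> integral {0..pi} (\<lambda>x. (ux s x)^2) = h10_sq (u s)"
    using cs_X by simp
qed

lemma cs_X_cont0: "((\<lambda>s. h10_sq (u s)) \<longlongrightarrow> h10_sq (u 0)) (at_right 0)"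
proof -
  have lim: "((\<lambda>s. h10_dist (u s) (u 0)) \<longlongrightarrow> 0) (at_right 0)"
    using cs_cont[of 0] by (rule tendsto_within_subset) auto
  have sq0: "sqi (h10_deriv (u 0))" using h10_rep_sqi[OF h10_deriv_rep[OF cs_h10]] by simp
  have bnd: "\<bar>sqrt (h10_sq (u s)) - sqrt (h10_sq (u 0))\<bar> \<le> h10_dist (u s) (u 0)" if s: "s > 0" for s
  proof -
    have sqs: "sqi (h10_deriv (u s))" using h10_rep_sqi[OF h10_deriv_rep[OF cs_h10]] s by simp
    have z: "sqi (\<lambda>x. 0)" by (rule sqi_cont) simp
    have e1: "nrm (h10_deriv (u s)) \<le> nrm (\<lambda>x. h10_deriv (u s) x - h10_deriv (u 0) x) + nrm (h10_deriv (u 0))"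
      using sqi_triangle_diff[OF sqs sq0 z] by simp
    have e2: "nrm (h10_deriv (u 0)) \<le> nrm (\<lambda>x. h10_deriv (u 0) x - h10_deriv (u s) x) + nrm (h10_deriv (u s))"
      using sqi_triangle_diff[OF sq0 sqs z] by simp
    show ?thesis using e1 e2 unfolding sqrt_h10_sq h10_dist_nrm
      by (simp add: nrm_minus_commute[of "h10_deriv (u 0)"] abs_le_iff)
  qed
  have "((\<lambda>s. sqrt (h10_sq (u s)) - sqrt (h10_sq (u 0))) \<longlongrightarrow> 0) (at_right 0)"
  proof (rule tendsto_sandwich[where f="\<lambda>s. - h10_dist (u s) (u 0)" and h="\<lambda>s. h10_dist (u s) (u 0)"])
    show "\<forall>\<^sub>F s in at_right 0. - h10_dist (u s) (u 0) \<le> sqrt (h10_sq (u s)) - sqrt (h10_sq (u 0))"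
      using eventually_at_right_less[of "0::real"]
    proof eventually_elim
      case (elim s) then show ?case using bnd[of s] by linarith
    qed
    show "\<forall>\<^sub>F s in at_right 0. sqrt (h10_sq (u s)) - sqrt (h10_sq (u 0)) \<le> h10_dist (u s) (u 0)"
      using eventually_at_right_less[of "0::real"]
    proof eventually_elim
      case (elim s) then show ?case using bnd[of s] by linarith
    qed
    show "((\<lambda>s. - h10_dist (u s) (u 0)) \<longlongrightarrow> 0) (at_right 0)" using tendsto_minus[OF lim] by simp
    show "((\<lambda>s. h10_dist (u s) (u 0)) \<longlongrightarrow> 0) (at_right 0)" by (rule lim)
  qed
  hence "((\<lambda>s. sqrt (h10_sq (u s))) \<longlongrightarrow> sqrt (h10_sq (u 0))) (at_right 0)"
    by (simp add: LIM_zero_iff)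
  hence "((\<lambda>s. (sqrt (h10_sq (u s)))^2) \<longlongrightarrow> (sqrt (h10_sq (u 0)))^2) (at_right 0)"
    by (rule tendsto_power)
  thus ?thesis using h10_sq_nonneg by simp
qed

lemma cs_fuxx:
  assumes fd: "\<forall>s. (f has_real_derivative f' s) (at s)" and cf': "continuous_on UNIV f'"
    and f0: "f 0 = 0" and t: "t > 0"
  shows "integral {0..pi} (\<lambda>x. f (u t x) * uxx t x) = - integral {0..pi} (\<lambda>x. f' (u t x) * (ux t x)^2)"
proof -
  have "integral {0..pi} (\<lambda>x. (f' (u t x) * ux t x) * ux t x) = - integral {0..pi} (\<lambda>x. f (u t x) * uxx t x)"
  proof (rule ibp0)
    fix x assume x: "x \<in> {0..pi}"
    show "((\<lambda>x. f (u t x)) has_real_derivative f' (u t x) * ux t x) (at x within {0..pi})"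
      by (rule DERIV_chain2[OF _ cs_D2[OF t x]]) (use fd in auto)
    show "(ux t has_real_derivative uxx t x) (at x within {0..pi})" using cs_D3[OF t x] by simp
  next
    show "continuous_on {0..pi} (\<lambda>x. f' (u t x) * ux t x)"
      by (intro continuous_intros continuous_on_compose2[OF cf' cs_cu[OF t]] cs_cux[OF t]) auto
    show "continuous_on {0..pi} (uxx t)" by (rule cs_cuxx[OF t])
    show "f (u t 0) * ux t 0 = 0" using cs_bd t f0 by simp
    show "f (u t pi) * ux t pi = 0" using cs_bd t f0 by simp
  qed
  moreover have "(\<lambda>x. (f' (u t x) * ux t x) * ux t x) = (\<lambda>x. f' (u t x) * (ux t x)^2)"
    by (auto simp: power2_eq_square)
  ultimately show ?thesis by simp
qed

lemma cs_Xineq: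
  assumes fd: "\<forall>s. (f has_real_derivative f' s) (at s)" and f1: "\<forall>s. f' s \<le> 1"
    and cf': "continuous_on UNIV f'" and f0: "f 0 = 0"
    and Am: "\<forall>r\<ge>0. m \<le> A r" and lam: "lam \<ge> 0" and t: "t > 0"
  shows "-2 * integral {0..pi} (\<lambda>x. ut t x * uxx t x) \<le>
           -2 * m * integral {0..pi} (\<lambda>x. (uxx t x)^2) + 2 * lam * h10_sq (u t)"
proof -
  define X where "X = h10_sq (u t)"
  define Z where "Z = integral {0..pi} (\<lambda>x. (uxx t x)^2)"
  have Z0: "Z \<ge> 0" unfolding Z_def by (rule integral_sq_nonneg)
  have AX: "m \<le> A X" using Am h10_sq_nonneg unfolding X_def by blast
  have iuxx2: "(\<lambda>x. (uxx t x)^2) integrable_on {0..pi}"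
    by (auto intro!: integrable_continuous_real continuous_intros cs_cuxx t)
  have ifu: "(\<lambda>x. f (u t x) * uxx t x) integrable_on {0..pi}"
    by (auto intro!: integrable_continuous_real continuous_intros cs_cuxx t
         continuous_on_compose2[OF _ cs_cu[OF t], of UNIV f] DERIV_continuous_on[of UNIV f f'] fd[rule_format])
  have "integral {0..pi} (\<lambda>x. ut t x * uxx t x) =
        integral {0..pi} (\<lambda>x. A X * (uxx t x)^2 + lam * (f (u t x) * uxx t x))"
    by (rule integral_eq_interior) (simp add: cs_pde[OF t] X_def power2_eq_square algebra_simps)
  also have "\<dots> = A X * Z + lam * integral {0..pi} (\<lambda>x. f (u t x) * uxx t x)"
    unfolding Z_def using iuxx2 ifu by (simp add: integral_add int_cmul)
  finally have e1: "integral {0..pi} (\<lambda>x. ut t x * uxx t x) = A X * Z + lam * integral {0..pi} (\<lambda>x. f (u t x) * uxx t x)" .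
  have "integral {0..pi} (\<lambda>x. f' (u t x) * (ux t x)^2) \<le> integral {0..pi} (\<lambda>x. (ux t x)^2)"
  proof (rule integral_le)
    show "(\<lambda>x. f' (u t x) * (ux t x)^2) integrable_on {0..pi}"
      by (intro integrable_continuous_real continuous_intros continuous_on_compose2[OF cf' cs_cu[OF t]] cs_cux[OF t]) auto
    show "(\<lambda>x. (ux t x)^2) integrable_on {0..pi}"
      by (intro integrable_continuous_real continuous_intros cs_cux[OF t])
    show "f' (u t x) * (ux t x)^2 \<le> (ux t x)^2" for x
      using f1 mult_right_mono[of "f' (u t x)" 1 "(ux t x)^2"] by simp
  qed
  hence e2: "integral {0..pi} (\<lambda>x. f (u t x) * uxx t x) \<ge> - X"
    unfolding cs_fuxx[OF fd cf' f0 t] X_def cs_X[OF t] by simp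
  have "-2 * integral {0..pi} (\<lambda>x. ut t x * uxx t x) = -2 * (A X * Z) - 2 * lam * integral {0..pi} (\<lambda>x. f (u t x) * uxx t x)"
    unfolding e1 by (simp add: algebra_simps)
  also have "\<dots> \<le> -2 * (m * Z) + 2 * lam * X"
  proof -
    have "m * Z \<le> A X * Z" using AX Z0 by (rule mult_right_mono)
    moreover have "lam * (- X) \<le> lam * integral {0..pi} (\<lambda>x. f (u t x) * uxx t x)"
      using e2 lam by (rule mult_left_mono)
    ultimately show ?thesis by linarith
  qed
  finally show ?thesis unfolding Z_def X_def by simp
qed

lemma cs_Xbound:
  assumes fd: "\<forall>s. (f has_real_derivative f' s) (at s)" and f1: "\<forall>s. f' s \<le> 1"
    and cf': "continuous_on UNIV f'" and f0: "f 0 = 0"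
    and Am: "\<forall>r\<ge>0. m \<le> A r" and m: "m \<ge> 0" and lam: "lam \<ge> 0" and t: "t \<ge> 0"
  shows "h10_sq (u t) \<le> exp (2 * lam * t) * h10_sq (u 0)"
proof (cases "t = 0")
  case True then show ?thesis by simp
next
  case False
  hence t: "t > 0" using t by simp
  define \<Phi> where "\<Phi> s = h10_sq (u s) * exp (- (2 * lam * s))" for s
  have mono: "\<Phi> t \<le> \<Phi> e" if e: "0 < e" "e \<le> t" for e
  proof (rule DERIV_nonpos_imp_nonincreasing[OF e(2)])
    fix x assume x: "e \<le> x" "x \<le> t"
    hence xp: "x > 0" using e by simp
    define D where "D = -2 * integral {0..pi} (\<lambda>y. ut x y * uxx x y)"
    have dX: "((\<lambda>s. h10_sq (u s)) has_real_derivative D) (at x)" unfolding D_def by (rule cs_Xderiv[OF xp])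
    have dPhi: "(\<Phi> has_real_derivative (D * exp (- (2 * lam * x)) + h10_sq (u x) * (exp (- (2 * lam * x)) * (- (2 * lam))))) (at x)"
      unfolding \<Phi>_def by (auto intro!: derivative_eq_intros dX)
    have "D \<le> -2 * m * integral {0..pi} (\<lambda>y. (uxx x y)^2) + 2 * lam * h10_sq (u x)"
      unfolding D_def by (rule cs_Xineq[OF fd f1 cf' f0 Am lam xp])
    moreover have "0 \<le> m * integral {0..pi} (\<lambda>y. (uxx x y)^2)" using m integral_sq_nonneg by simp
    ultimately have "D - 2 * lam * h10_sq (u x) \<le> 0" by linarith
    hence "(D - 2 * lam * h10_sq (u x)) * exp (- (2 * lam * x)) \<le> 0"
      by (simp add: mult_nonpos_nonneg)
    moreover have "D * exp (- (2 * lam * x)) + h10_sq (u x) * (exp (- (2 * lam * x)) * (- (2 * lam)))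
        = (D - 2 * lam * h10_sq (u x)) * exp (- (2 * lam * x))" by (simp add: algebra_simps)
    ultimately show "\<exists>y. (\<Phi> has_real_derivative y) (at x) \<and> y \<le> 0" using dPhi by auto
  qed
  have lim: "(\<Phi> \<longlongrightarrow> h10_sq (u 0) * exp (- (2 * lam * 0))) (at_right 0)"
    unfolding \<Phi>_def by (intro tendsto_intros cs_X_cont0)
  have "\<Phi> t \<le> h10_sq (u 0)"
  proof (rule tendsto_le[of "at_right 0" \<Phi> _ "\<lambda>_. \<Phi> t"])
    show "at_right (0::real) \<noteq> bot" by simp
    show "(\<Phi> \<longlongrightarrow> h10_sq (u 0)) (at_right 0)" using lim by simp
    show "((\<lambda>_. \<Phi> t) \<longlongrightarrow> \<Phi> t) (at_right 0)" by simp
    show "\<forall>\<^sub>F x in at_right 0. \<Phi> t \<le> \<Phi> x"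
      unfolding eventually_at_right[OF t] using mono t by (intro exI[of _ t]) auto
  qed
  note P = this
  have A1: "\<Phi> t * exp (2 * lam * t) \<le> h10_sq (u 0) * exp (2 * lam * t)"
    using P by (rule mult_right_mono) simp
  have A2: "\<Phi> t * exp (2 * lam * t) = h10_sq (u t)"
    unfolding \<Phi>_def by (simp add: mult.assoc flip: exp_add)
  have "h10_sq (u t) \<le> h10_sq (u 0) * exp (2 * lam * t)" using A1 A2 by linarith
  thus ?thesis by (metis mult.commute)
qed

end

lemma gronwall_abs:
  fixes W Xv DW DXv Z :: "real \<Rightarrow> real" and C1 C2 C3 d m lam R T \<epsilon> t :: real
  assumes e: "0 < \<epsilon>" "\<epsilon> \<le> t" "t \<le> T"
    and dW: "\<And>s. \<epsilon> \<le> s \<Longrightarrow> s \<le> t \<Longrightarrow> (W has_real_derivative DW s) (at s)"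
    and dX: "\<And>s. \<epsilon> \<le> s \<Longrightarrow> s \<le> t \<Longrightarrow> (Xv has_real_derivative DXv s) (at s)"
    and iW: "\<And>s. \<epsilon> \<le> s \<Longrightarrow> s \<le> t \<Longrightarrow> DW s \<le> C1 * W s + (C2 * W s + C3 * d) * Z s"
    and iX: "\<And>s. \<epsilon> \<le> s \<Longrightarrow> s \<le> t \<Longrightarrow> DXv s \<le> -2 * m * Z s + 2 * lam * Xv s"
    and bX: "\<And>s. \<epsilon> \<le> s \<Longrightarrow> s \<le> t \<Longrightarrow> 0 \<le> Xv s \<and> Xv s \<le> R"
    and W0: "\<And>s. \<epsilon> \<le> s \<Longrightarrow> s \<le> t \<Longrightarrow> 0 \<le> W s"
    and Z0: "\<And>s. \<epsilon> \<le> s \<Longrightarrow> s \<le> t \<Longrightarrow> 0 \<le> Z s"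
    and C: "0 \<le> C1" "0 \<le> C2" "0 \<le> C3" "0 \<le> d" and m: "m > 0" and lam: "lam \<ge> 0"
  shows "W t \<le> exp ((C1 + C2 * lam * R / m) * T) * exp (C2 / (2 * m) * R) * W \<epsilon>
           + exp ((C1 + C2 * lam * R / m) * T) * (exp (C2 / (2 * m) * R) * C3 / (2 * m)) * (2 * lam * R * T + R) * d"
proof -
  define \<kappa> where "\<kappa> = C1 + C2 * lam * R / m"
  define \<mu> where "\<mu> = C2 / (2 * m)"
  define G where "G = exp (\<mu> * R)"
  define c0 where "c0 = G * C3 / (2 * m)"
  have R0: "R \<ge> 0" using bX[of \<epsilon>] e by auto
  have kap: "\<kappa> \<ge> 0" unfolding \<kappa>_def using C m lam R0 by (auto intro!: divide_nonneg_pos mult_nonneg_nonneg)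
  have mu: "\<mu> \<ge> 0" unfolding \<mu>_def using C m by auto
  define \<Phi> where "\<Phi> s = W s * exp (- \<kappa> * s + \<mu> * Xv s)" for s
  define \<Psi> where "\<Psi> s = \<Phi> s - c0 * d * (2 * lam * R * s - Xv s)" for s
  have "\<Psi> t \<le> \<Psi> \<epsilon>"
  proof (rule DERIV_nonpos_imp_nonincreasing[OF e(2)])
    fix s assume s: "\<epsilon> \<le> s" "s \<le> t"
    define E where "E = exp (- \<kappa> * s + \<mu> * Xv s)"
    have E0: "E > 0" unfolding E_def by simp
    have EG: "E \<le> G"
    proof -
      have "0 \<le> \<kappa> * s" using kap s e by simp
      moreover have "\<mu> * Xv s \<le> \<mu> * R" using mu bX[OF s] by (intro mult_left_mono) auto
      ultimately have "- \<kappa> * s + \<mu> * Xv s \<le> \<mu> * R" by linarith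
      thus ?thesis unfolding E_def G_def by simp
    qed
    have dPsi: "(\<Psi> has_real_derivative
        (DW s * E + W s * (E * (- \<kappa> + \<mu> * DXv s)) - c0 * d * (2 * lam * R - DXv s))) (at s)"
      unfolding \<Psi>_def \<Phi>_def E_def
      by (auto intro!: derivative_eq_intros dW[OF s] dX[OF s] simp: algebra_simps)
    have q0: "2 * lam * R - DXv s \<ge> 2 * m * Z s"
    proof -
      have "lam * Xv s \<le> lam * R" using bX[OF s] lam by (intro mult_left_mono) auto
      thus ?thesis using iX[OF s] by linarith
    qed
    have Zle: "Z s \<le> (2 * lam * R - DXv s) / (2 * m)" using q0 m by (simp add: field_simps)
    have "DW s \<le> C1 * W s + (C2 * W s + C3 * d) * ((2 * lam * R - DXv s) / (2 * m))"
    proof -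
      have "(C2 * W s + C3 * d) * Z s \<le> (C2 * W s + C3 * d) * ((2 * lam * R - DXv s) / (2 * m))"
        using Zle C W0[OF s] by (intro mult_left_mono) auto
      thus ?thesis using iW[OF s] by linarith
    qed
    also have "\<dots> = \<kappa> * W s - \<mu> * DXv s * W s + C3 * d * (2 * lam * R - DXv s) / (2 * m)"
      unfolding \<kappa>_def \<mu>_def using m by (simp add: field_simps)
    finally have "DW s - \<kappa> * W s + \<mu> * DXv s * W s \<le> C3 * d * (2 * lam * R - DXv s) / (2 * m)" by linarith
    hence "E * (DW s - \<kappa> * W s + \<mu> * DXv s * W s) \<le> E * (C3 * d * (2 * lam * R - DXv s) / (2 * m))"
      using E0 by (intro mult_left_mono) auto
    also have "\<dots> \<le> G * (C3 * d * (2 * lam * R - DXv s) / (2 * m))"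
    proof (rule mult_right_mono[OF EG])
      have "0 \<le> 2 * m * Z s" using m Z0[OF s] by simp
      hence "0 \<le> 2 * lam * R - DXv s" using q0 by linarith
      then show "0 \<le> C3 * d * (2 * lam * R - DXv s) / (2 * m)"
        using C m by (intro divide_nonneg_pos mult_nonneg_nonneg) auto
    qed
    also have "\<dots> = c0 * d * (2 * lam * R - DXv s)" unfolding c0_def by (simp add: field_simps)
    finally have "DW s * E + W s * (E * (- \<kappa> + \<mu> * DXv s)) - c0 * d * (2 * lam * R - DXv s) \<le> 0"
      by (simp add: algebra_simps)
    thus "\<exists>y. (\<Psi> has_real_derivative y) (at s) \<and> y \<le> 0" using dPsi by blast
  qed
  hence P1: "\<Phi> t \<le> \<Phi> \<epsilon> + c0 * d * (2 * lam * R * (t - \<epsilon>) - Xv t + Xv \<epsilon>)"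
    unfolding \<Psi>_def by (simp add: algebra_simps)
  have c00: "c0 \<ge> 0" unfolding c0_def G_def using C m by auto
  have P2: "\<Phi> \<epsilon> \<le> G * W \<epsilon>"
  proof -
    have "0 \<le> \<kappa> * \<epsilon>" using kap e by simp
    moreover have "\<mu> * Xv \<epsilon> \<le> \<mu> * R" using mu bX[of \<epsilon>] e by (intro mult_left_mono) auto
    ultimately have "- \<kappa> * \<epsilon> + \<mu> * Xv \<epsilon> \<le> \<mu> * R" by linarith
    hence "exp (- \<kappa> * \<epsilon> + \<mu> * Xv \<epsilon>) \<le> G" unfolding G_def by simp
    moreover have "0 \<le> W \<epsilon>" using W0[of \<epsilon>] e by simp
    ultimately have "W \<epsilon> * exp (- \<kappa> * \<epsilon> + \<mu> * Xv \<epsilon>) \<le> W \<epsilon> * G" by (intro mult_left_mono)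
    thus ?thesis unfolding \<Phi>_def by (simp only: mult.commute)
  qed
  have P3: "2 * lam * R * (t - \<epsilon>) - Xv t + Xv \<epsilon> \<le> 2 * lam * R * T + R"
  proof -
    have "2 * lam * R * (t - \<epsilon>) \<le> 2 * lam * R * T"
      using lam R0 e by (intro mult_left_mono) auto
    thus ?thesis using bX[of t] bX[of \<epsilon>] e by auto
  qed
  have "\<Phi> t \<le> G * W \<epsilon> + c0 * d * (2 * lam * R * T + R)"
  proof -
    have "c0 * d * (2 * lam * R * (t - \<epsilon>) - Xv t + Xv \<epsilon>) \<le> c0 * d * (2 * lam * R * T + R)"
      using P3 c00 C by (intro mult_left_mono) auto
    thus ?thesis using P1 P2 by linarith
  qed
  note P4 = this
  have Wt: "W t = \<Phi> t * exp (\<kappa> * t - \<mu> * Xv t)"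
    unfolding \<Phi>_def by (simp add: mult.assoc flip: exp_add)
  have ex: "exp (\<kappa> * t - \<mu> * Xv t) \<le> exp (\<kappa> * T)"
  proof -
    have "\<kappa> * t \<le> \<kappa> * T" using kap e by (intro mult_left_mono) auto
    moreover have "0 \<le> \<mu> * Xv t" using mu bX[of t] e by simp
    ultimately show ?thesis by simp
  qed
  have Phi0: "\<Phi> t \<ge> 0" unfolding \<Phi>_def using W0[of t] e by simp
  have "W t \<le> \<Phi> t * exp (\<kappa> * T)" unfolding Wt using Phi0 ex by (rule mult_left_mono[rotated])
  also have "\<dots> \<le> (G * W \<epsilon> + c0 * d * (2 * lam * R * T + R)) * exp (\<kappa> * T)"
    using P4 by (rule mult_right_mono) simp
  finally have "W t \<le> (G * W \<epsilon> + c0 * d * (2 * lam * R * T + R)) * exp (\<kappa> * T)" .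
  thus ?thesis unfolding \<kappa>_def \<mu>_def G_def c0_def by (simp add: algebra_simps)
qed

lemma h10_dist_nonneg: "h10_dist u v \<ge> 0"
  unfolding h10_dist_nrm by (rule nrm_nonneg)

lemma h10_dist_sym: "h10_dist u v = h10_dist v u"
  unfolding h10_dist_nrm by (rule nrm_minus_commute)

lemma h10_dist_tri:
  assumes "h10 a" "h10 b" "h10 c"
  shows "h10_dist a c \<le> h10_dist a b + h10_dist b c"
  unfolding h10_dist_nrm
  by (rule sqi_triangle_diff) (use assms h10_rep_sqi h10_deriv_rep in blast)+

lemma abs_le_sqrt_of_sq: "x^2 \<le> y \<Longrightarrow> \<bar>x\<bar> \<le> sqrt y"
  using real_sqrt_le_mono[of "x^2" y] by simp

lemma key_ineq:
  fixes A1 A2 f :: "real \<Rightarrow> real" and U Ut Ux Uxx V Vt Vx Vxx :: "real \<Rightarrow> real \<Rightarrow> real"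
  assumes cU: "csol A1 lam f U Ut Ux Uxx" and cV: "csol A2 lam f V Vt Vx Vxx"
    and m: "m > 0" and lam: "lam \<ge> 0"
    and Am1: "\<forall>r\<ge>0. m \<le> A1 r"
    and coef: "\<forall>r1 r2. 0 \<le> r1 \<longrightarrow> r1 \<le> R \<longrightarrow> 0 \<le> r2 \<longrightarrow> r2 \<le> R \<longrightarrow> (A1 r1 - A2 r2)^2 \<le> \<Lambda> * (d + (r1 - r2)^2)"
    and La: "\<Lambda> \<ge> 0" and d: "d \<ge> 0"
    and Kf: "\<forall>x y. \<bar>x\<bar> \<le> sqrt (pi * R) \<longrightarrow> \<bar>y\<bar> \<le> sqrt (pi * R) \<longrightarrow> \<bar>f x - f y\<bar> \<le> K * \<bar>x - y\<bar>"
    and K: "K \<ge> 0"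
    and s: "s > 0" and X1R: "h10_sq (U s) \<le> R" and X2R: "h10_sq (V s) \<le> R"
  shows "-2 * integral {0..pi} (\<lambda>x. (Ut s x - Vt s x) * (Uxx s x - Vxx s x)) \<le>
          (lam^2 * K^2 * pi^2 / m) * (h10_dist (U s) (V s))^2 +
          ((4 * R * \<Lambda> / m) * (h10_dist (U s) (V s))^2 + (\<Lambda> / m) * d) * integral {0..pi} (\<lambda>x. (Vxx s x)^2)"
proof -
  define W where "W = (h10_dist (U s) (V s))^2"
  define Z where "Z = integral {0..pi} (\<lambda>x. (Vxx s x)^2)"
  define X1 where "X1 = h10_sq (U s)"
  define X2 where "X2 = h10_sq (V s)"
  define \<alpha>1 where "\<alpha>1 = A1 X1"
  define \<alpha>2 where "\<alpha>2 = A2 X2"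
  have X10: "X1 \<ge> 0" and X20: "X2 \<ge> 0" unfolding X1_def X2_def by (auto intro: h10_sq_nonneg)
  have Z0: "Z \<ge> 0" unfolding Z_def by (rule integral_sq_nonneg)
  have W0: "W \<ge> 0" unfolding W_def by simp
  have cux: "continuous_on {0..pi} (Ux s)" by (rule cs_cux[OF cU s])
  have cvx: "continuous_on {0..pi} (Vx s)" by (rule cs_cux[OF cV s])
  have repU: "h10_rep (U s) (Ux s)" by (rule cs_rep[OF cU s])
  have repV: "h10_rep (V s) (Vx s)" by (rule cs_rep[OF cV s])
  have sqU: "sqi (Ux s)" and sqV: "sqi (Vx s)" using cux cvx by (auto intro: sqi_cont)
  have X1i: "X1 = integral {0..pi} (\<lambda>x. (Ux s x)^2)" unfolding X1_def by (rule cs_X[OF cU s])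
  have X2i: "X2 = integral {0..pi} (\<lambda>x. (Vx s x)^2)" unfolding X2_def by (rule cs_X[OF cV s])
  have Wn: "h10_dist (U s) (V s) = nrm (\<lambda>x. Ux s x - Vx s x)" by (rule h10_dist_rep[OF repU repV])
  have sqD: "sqi (\<lambda>x. Ux s x - Vx s x)" by (rule sqi_diff[OF sqU sqV])
  have Wi: "W = integral {0..pi} (\<lambda>x. (Ux s x - Vx s x)^2)"
    unfolding W_def Wn by (rule sqi_nrm_sq[OF sqD])
  have repW: "h10_rep (\<lambda>x. U s x - V s x) (\<lambda>x. Ux s x - Vx s x)"
  proof (rule h10_rep_classical)
    show "\<forall>x\<in>{0..pi}. ((\<lambda>x. U s x - V s x) has_real_derivative Ux s x - Vx s x) (at x within {0..pi})"
      using cs_D2[OF cU s] cs_D2[OF cV s] by (auto intro: DERIV_diff)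
    show "continuous_on {0..pi} (\<lambda>x. Ux s x - Vx s x)" by (intro continuous_intros cux cvx)
    show "U s 0 - V s 0 = 0" using cs_bd[OF cU] cs_bd[OF cV] s by simp
    show "U s pi - V s pi = 0" using cs_bd[OF cU] cs_bd[OF cV] s by simp
  qed
  have wsup: "(U s x - V s x)^2 \<le> pi * W" if x: "x \<in> {0..pi}" for x
    using h10_rep_sup[OF repW x] unfolding Wi by simp
  have Ub: "\<bar>U s x\<bar> \<le> sqrt (pi * R)" if x: "x \<in> {0..pi}" for x
  proof -
    have "(U s x)^2 \<le> pi * X1" using h10_rep_sup[OF repU x] unfolding X1i by simp
    also have "\<dots> \<le> pi * R" using X1R unfolding X1_def by simp
    finally show ?thesis by (rule abs_le_sqrt_of_sq)
  qed
  have Vb: "\<bar>V s x\<bar> \<le> sqrt (pi * R)" if x: "x \<in> {0..pi}" for x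
  proof -
    have "(V s x)^2 \<le> pi * X2" using h10_rep_sup[OF repV x] unfolding X2i by simp
    also have "\<dots> \<le> pi * R" using X2R unfolding X2_def by simp
    finally show ?thesis by (rule abs_le_sqrt_of_sq)
  qed
  have fb: "(f (U s x) - f (V s x))^2 \<le> K^2 * pi * W" if x: "x \<in> {0..pi}" for x
  proof -
    have "\<bar>f (U s x) - f (V s x)\<bar> \<le> K * \<bar>U s x - V s x\<bar>" using Kf Ub[OF x] Vb[OF x] by blast
    hence "\<bar>f (U s x) - f (V s x)\<bar>^2 \<le> (K * \<bar>U s x - V s x\<bar>)^2"
      by (intro power_mono) auto
    also have "\<dots> = K^2 * (U s x - V s x)^2" by (simp add: power_mult_distrib)
    also have "\<dots> \<le> K^2 * (pi * W)" using wsup[OF x] by (intro mult_left_mono) auto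
    finally show ?thesis by simp
  qed
  have Xd: "(X1 - X2)^2 \<le> 4 * R * W"
  proof -
    have "X1 - X2 = integral {0..pi} (\<lambda>x. (Ux s x)^2 - (Vx s x)^2)"
      unfolding X1i X2i by (rule integral_diff[symmetric]) (auto intro!: integrable_continuous_real continuous_intros cux cvx)
    also have "\<dots> = integral {0..pi} (\<lambda>x. (Ux s x - Vx s x) * (Ux s x + Vx s x))"
      by (rule integral_cong) (simp add: power2_eq_square algebra_simps)
    finally have e: "X1 - X2 = integral {0..pi} (\<lambda>x. (Ux s x - Vx s x) * (Ux s x + Vx s x))" .
    have "\<bar>X1 - X2\<bar> \<le> nrm (\<lambda>x. Ux s x - Vx s x) * nrm (\<lambda>x. Ux s x + Vx s x)"
      unfolding e by (rule sqi_inner_le[OF sqD sqi_add[OF sqU sqV]])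
    also have "\<dots> \<le> nrm (\<lambda>x. Ux s x - Vx s x) * (sqrt X1 + sqrt X2)"
    proof (rule mult_left_mono[OF _ nrm_nonneg])
      have "nrm (\<lambda>x. Ux s x + Vx s x) \<le> nrm (Ux s) + nrm (Vx s)" by (rule sqi_triangle[OF sqU sqV])
      also have "nrm (Ux s) = sqrt X1" unfolding X1i nrm_def ..
      also have "nrm (Vx s) = sqrt X2" unfolding X2i nrm_def ..
      finally show "nrm (\<lambda>x. Ux s x + Vx s x) \<le> sqrt X1 + sqrt X2" .
    qed
    finally have ab: "\<bar>X1 - X2\<bar> \<le> sqrt W * (sqrt X1 + sqrt X2)"
      unfolding W_def Wn[symmetric] using h10_dist_nonneg by simp
    have "(X1 - X2)^2 = \<bar>X1 - X2\<bar>^2" by simp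
    also have "\<dots> \<le> (sqrt W * (sqrt X1 + sqrt X2))^2"
      using ab by (intro power_mono) auto
    also have "\<dots> = W * (sqrt X1 + sqrt X2)^2" using W0 by (simp add: power_mult_distrib)
    also have "\<dots> \<le> W * (4 * R)"
    proof (rule mult_left_mono[OF _ W0])
      have "(sqrt X1 + sqrt X2)^2 \<le> 2 * (sqrt X1)^2 + 2 * (sqrt X2)^2"
        using sum_squares_bound[of "sqrt X1" "sqrt X2"] by (simp add: power2_eq_square algebra_simps)
      also have "\<dots> = 2 * X1 + 2 * X2" using X10 X20 by simp
      also have "\<dots> \<le> 4 * R" using X1R X2R unfolding X1_def X2_def by simp
      finally show "(sqrt X1 + sqrt X2)^2 \<le> 4 * R" .
    qed
    finally show ?thesis by (simp add: algebra_simps)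
  qed
  have Ralpha: "(\<alpha>1 - \<alpha>2)^2 \<le> \<Lambda> * (d + 4 * R * W)"
  proof -
    have "(\<alpha>1 - \<alpha>2)^2 \<le> \<Lambda> * (d + (X1 - X2)^2)"
      unfolding \<alpha>1_def \<alpha>2_def using coef X10 X20 X1R X2R unfolding X1_def X2_def by blast
    also have "\<dots> \<le> \<Lambda> * (d + 4 * R * W)" using Xd La by (intro mult_left_mono) auto
    finally show ?thesis .
  qed
  have a1m: "m \<le> \<alpha>1" unfolding \<alpha>1_def using Am1 X10 by blast
  have pw: "- ((Ut s x - Vt s x) * (Uxx s x - Vxx s x)) \<le>
      (\<alpha>1 - \<alpha>2)^2 / (2 * m) * (Vxx s x)^2 + lam^2 * K^2 * pi * W / (2 * m)" if x: "x \<in> {0<..<pi}" for x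
  proof -
    define a where "a = Uxx s x - Vxx s x"
    define b where "b = Vxx s x"
    define e where "e = f (U s x) - f (V s x)"
    have xI: "x \<in> {0..pi}" using x by auto
    have "Ut s x - Vt s x = \<alpha>1 * a + (\<alpha>1 - \<alpha>2) * b + lam * e"
      unfolding a_def b_def e_def \<alpha>1_def \<alpha>2_def X1_def X2_def
      using cs_pde[OF cU s x] cs_pde[OF cV s x] by (simp add: algebra_simps)
    hence "- ((Ut s x - Vt s x) * (Uxx s x - Vxx s x)) = - ((\<alpha>1 * a + (\<alpha>1 - \<alpha>2) * b + lam * e) * a)"
      unfolding a_def by simp
    also have "\<dots> = - \<alpha>1 * a^2 + a * (- (\<alpha>1 - \<alpha>2) * b) + a * (- lam * e)"
      by (simp add: power2_eq_square algebra_simps)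
    also have "\<dots> \<le> - m * a^2 + ((m / 2) * a^2 + (- (\<alpha>1 - \<alpha>2) * b)^2 / (2 * m)) + ((m / 2) * a^2 + (- lam * e)^2 / (2 * m))"
    proof -
      have "- \<alpha>1 * a^2 \<le> - m * a^2" using a1m by (simp add: mult_right_mono)
      thus ?thesis using young[OF m, of a "- (\<alpha>1 - \<alpha>2) * b"] young[OF m, of a "- lam * e"] by linarith
    qed
    also have "\<dots> = (\<alpha>1 - \<alpha>2)^2 / (2 * m) * b^2 + lam^2 * e^2 / (2 * m)"
      using m by (simp add: power2_eq_square field_simps)
    also have "lam^2 * e^2 / (2 * m) \<le> lam^2 * (K^2 * pi * W) / (2 * m)"
      using fb[OF xI] m unfolding e_def by (intro divide_right_mono mult_left_mono) auto
    finally show ?thesis unfolding b_def by (simp add: algebra_simps)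
  qed
  have cuxx: "continuous_on {0..pi} (Uxx s)" by (rule cs_cuxx[OF cU s])
  have cvxx: "continuous_on {0..pi} (Vxx s)" by (rule cs_cuxx[OF cV s])
  have cut: "continuous_on {0..pi} (Ut s)" by (rule cs_cut[OF cU s])
  have cvt: "continuous_on {0..pi} (Vt s)" by (rule cs_cut[OF cV s])
  have "integral {0..pi} (\<lambda>x. - ((Ut s x - Vt s x) * (Uxx s x - Vxx s x))) \<le>
        integral {0..pi} (\<lambda>x. (\<alpha>1 - \<alpha>2)^2 / (2 * m) * (Vxx s x)^2 + lam^2 * K^2 * pi * W / (2 * m))"
  proof (rule integral_le_interior)
    show "(\<lambda>x. - ((Ut s x - Vt s x) * (Uxx s x - Vxx s x))) integrable_on {0..pi}"
      by (auto intro!: integrable_continuous_real continuous_intros cuxx cvxx cut cvt)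
    show "(\<lambda>x. (\<alpha>1 - \<alpha>2)^2 / (2 * m) * (Vxx s x)^2 + lam^2 * K^2 * pi * W / (2 * m)) integrable_on {0..pi}"
      using m by (auto intro!: integrable_continuous_real continuous_intros cvxx)
    show "\<And>x. x \<in> {0<..<pi} \<Longrightarrow> - ((Ut s x - Vt s x) * (Uxx s x - Vxx s x)) \<le>
         (\<alpha>1 - \<alpha>2)^2 / (2 * m) * (Vxx s x)^2 + lam^2 * K^2 * pi * W / (2 * m)"
      by (rule pw)
  qed
  also have "\<dots> = (\<alpha>1 - \<alpha>2)^2 / (2 * m) * Z + lam^2 * K^2 * pi * W / (2 * m) * pi"
  proof -
    have i1: "(\<lambda>x. (\<alpha>1 - \<alpha>2)^2 / (2 * m) * (Vxx s x)^2) integrable_on {0..pi}"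
      using m by (auto intro!: integrable_continuous_real continuous_intros cvxx)
    have i2: "(\<lambda>x. lam^2 * K^2 * pi * W / (2 * m)) integrable_on {0..pi}" by (rule integrable_const_ivl)
    show ?thesis unfolding Z_def integral_add[OF i1 i2] by simp
  qed
  finally have I: "integral {0..pi} (\<lambda>x. - ((Ut s x - Vt s x) * (Uxx s x - Vxx s x))) \<le>
      (\<alpha>1 - \<alpha>2)^2 / (2 * m) * Z + lam^2 * K^2 * pi * W / (2 * m) * pi" .
  have "-2 * integral {0..pi} (\<lambda>x. (Ut s x - Vt s x) * (Uxx s x - Vxx s x)) =
      2 * integral {0..pi} (\<lambda>x. - ((Ut s x - Vt s x) * (Uxx s x - Vxx s x)))" by simp
  also have "\<dots> \<le> 2 * ((\<alpha>1 - \<alpha>2)^2 / (2 * m) * Z + lam^2 * K^2 * pi * W / (2 * m) * pi)"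
    using I by (rule mult_left_mono) simp
  also have "\<dots> = (\<alpha>1 - \<alpha>2)^2 * Z / m + (lam^2 * K^2 * pi^2 / m) * W"
    using m by (simp add: field_simps power2_eq_square)
  also have "(\<alpha>1 - \<alpha>2)^2 * Z / m \<le> \<Lambda> * (d + 4 * R * W) * Z / m"
    using Ralpha Z0 m by (intro divide_right_mono mult_right_mono) auto
  also have "\<Lambda> * (d + 4 * R * W) * Z / m = ((4 * R * \<Lambda> / m) * W + (\<Lambda> / m) * d) * Z"
    using m by (simp add: field_simps)
  finally show ?thesis unfolding W_def Z_def by (simp add: algebra_simps)
qed

lemma cont_pair_diff:
  fixes g h :: "real \<Rightarrow> real \<Rightarrow> real" and S :: "(real \<times> real) set"
  assumes "continuous_on S (\<lambda>(s,x). g s x)" "continuous_on S (\<lambda>(s,x). h s x)"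
  shows "continuous_on S (\<lambda>(s,x). g s x - h s x)"
proof -
  have "continuous_on S (\<lambda>p. (\<lambda>(s,x). g s x) p - (\<lambda>(s,x). h s x) p)"
    by (rule continuous_on_diff[OF assms])
  moreover have "(\<lambda>p. (\<lambda>(s,x). g s x) p - (\<lambda>(s,x). h s x) p) = (\<lambda>(s,x). g s x - h s x)"
    by (auto simp: fun_eq_iff)
  ultimately show ?thesis by simp
qed

lemma W_formula:
  assumes cU: "csol A1 lam f U Ut Ux Uxx" and cV: "csol A2 lam f V Vt Vx Vxx" and s: "s > 0"
  shows "(h10_dist (U s) (V s))^2 = integral {0..pi} (\<lambda>x. (Ux s x - Vx s x)^2)"
proof -
  have repU: "h10_rep (U s) (Ux s)" by (rule cs_rep[OF cU s])
  have repV: "h10_rep (V s) (Vx s)" by (rule cs_rep[OF cV s])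
  have sqD: "sqi (\<lambda>x. Ux s x - Vx s x)"
    by (rule sqi_diff; rule sqi_cont; rule cs_cux[OF _ s]) (use cU cV in auto)
  show ?thesis unfolding h10_dist_rep[OF repU repV] by (rule sqi_nrm_sq[OF sqD])
qed

lemma W_deriv:
  assumes cU: "csol A1 lam f U Ut Ux Uxx" and cV: "csol A2 lam f V Vt Vx Vxx" and t: "t > 0"
  shows "((\<lambda>s. (h10_dist (U s) (V s))^2) has_real_derivative
           (-2 * integral {0..pi} (\<lambda>x. (Ut t x - Vt t x) * (Uxx t x - Vxx t x)))) (at t)"
proof (rule has_field_derivative_transform_within_open)
  show "((\<lambda>s. integral {0..pi} (\<lambda>x. (Ux s x - Vx s x)^2)) has_real_derivative
           (-2 * integral {0..pi} (\<lambda>x. (Ut t x - Vt t x) * (Uxx t x - Vxx t x)))) (at t)"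
  proof (rule energy_deriv[where w="\<lambda>s x. U s x - V s x" and wt="\<lambda>s x. Ut s x - Vt s x"
        and wx="\<lambda>s x. Ux s x - Vx s x" and wxx="\<lambda>s x. Uxx s x - Vxx s x", OF t])
    fix s x :: real assume s: "s > 0" and x: "x \<in> {0..pi}"
    show "((\<lambda>s. U s x - V s x) has_real_derivative Ut s x - Vt s x) (at s)"
      by (rule DERIV_diff[OF cs_D1[OF cU s x] cs_D1[OF cV s x]])
    show "((\<lambda>y. U s y - V s y) has_real_derivative Ux s x - Vx s x) (at x within {0..pi})"
      by (rule DERIV_diff[OF cs_D2[OF cU s x] cs_D2[OF cV s x]])
    show "((\<lambda>y. Ux s y - Vx s y) has_real_derivative Uxx s x - Vxx s x) (at x within {0..pi})"
      by (rule DERIV_diff[OF cs_D3[OF cU s x] cs_D3[OF cV s x]])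
  next
    show "continuous_on ({0<..} \<times> {0..pi}) (\<lambda>(s, x). Ut s x - Vt s x)"
      by (rule cont_pair_diff[OF cs_Ct[OF cU] cs_Ct[OF cV]])
    show "continuous_on ({0<..} \<times> {0..pi}) (\<lambda>(s, x). Uxx s x - Vxx s x)"
      by (rule cont_pair_diff[OF cs_Cxx[OF cU] cs_Cxx[OF cV]])
  next
    fix s :: real assume s: "s > 0"
    show "U s 0 - V s 0 = 0" using cs_bd[OF cU] cs_bd[OF cV] s by simp
    show "U s pi - V s pi = 0" using cs_bd[OF cU] cs_bd[OF cV] s by simp
  qed
  show "open {0::real<..}" by simp
  show "t \<in> {0<..}" using t by simp
  show "\<And>s. s \<in> {0<..} \<Longrightarrow> integral {0..pi} (\<lambda>x. (Ux s x - Vx s x)^2) = (h10_dist (U s) (V s))^2"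
    using W_formula[OF cU cV] by simp
qed

lemma W_estimate:
  fixes f f' :: "real \<Rightarrow> real" and lam m \<Lambda> R0 T :: real
  assumes fd: "\<forall>s. (f has_real_derivative f' s) (at s)" and f1: "\<forall>s. f' s \<le> 1"
    and cf': "continuous_on UNIV f'" and f0: "f 0 = 0"
    and m: "m > 0" and lam: "lam \<ge> 0" and T: "T > 0" and La: "\<Lambda> \<ge> 0" and R0: "R0 \<ge> 0"
  shows "\<exists>K1 K2. \<forall>A1 A2 U Ut Ux Uxx V Vt Vx Vxx d t.
     csol A1 lam f U Ut Ux Uxx \<and> csol A2 lam f V Vt Vx Vxx \<and>
     (\<forall>r\<ge>0. m \<le> A1 r) \<and> (\<forall>r\<ge>0. m \<le> A2 r) \<and>
     (\<forall>r1 r2. 0 \<le> r1 \<longrightarrow> r1 \<le> exp (2 * lam * T) * R0 \<longrightarrow> 0 \<le> r2 \<longrightarrow> r2 \<le> exp (2 * lam * T) * R0 \<longrightarrow>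
         (A1 r1 - A2 r2)^2 \<le> \<Lambda> * (d + (r1 - r2)^2)) \<and>
     d \<ge> 0 \<and> h10_sq (U 0) \<le> R0 \<and> h10_sq (V 0) \<le> R0 \<and> 0 < t \<and> t \<le> T
     \<longrightarrow> (h10_dist (U t) (V t))^2 \<le> K1 * (h10_dist (U 0) (V 0))^2 + K2 * d"
proof -
  define R where "R = exp (2 * lam * T) * R0"
  have R: "R \<ge> 0" unfolding R_def using R0 by simp
  obtain K where K: "K \<ge> 0" "\<forall>x y. \<bar>x\<bar> \<le> sqrt (pi * R) \<longrightarrow> \<bar>y\<bar> \<le> sqrt (pi * R) \<longrightarrow> \<bar>f x - f y\<bar> \<le> K * \<bar>x - y\<bar>"
    using f_lip[OF fd cf', of "sqrt (pi * R)"] by blast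
  define C1 where "C1 = lam^2 * K^2 * pi^2 / m"
  define C2 where "C2 = 4 * R * \<Lambda> / m"
  define C3 where "C3 = \<Lambda> / m"
  have C: "0 \<le> C1" "0 \<le> C2" "0 \<le> C3" unfolding C1_def C2_def C3_def using m R La by auto
  define K1 where "K1 = exp ((C1 + C2 * lam * R / m) * T) * exp (C2 / (2 * m) * R)"
  define K2 where "K2 = exp ((C1 + C2 * lam * R / m) * T) * (exp (C2 / (2 * m) * R) * C3 / (2 * m)) * (2 * lam * R * T + R)"
  have K1: "K1 \<ge> 0" unfolding K1_def by simp
  show ?thesis
  proof (rule exI[of _ K1], rule exI[of _ K2], intro allI impI)
    fix A1 A2 U Ut Ux Uxx V Vt Vx Vxx d t
    assume H: "csol A1 lam f U Ut Ux Uxx \<and> csol A2 lam f V Vt Vx Vxx \<and>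
     (\<forall>r\<ge>0. m \<le> A1 r) \<and> (\<forall>r\<ge>0. m \<le> A2 r) \<and>
     (\<forall>r1 r2. 0 \<le> r1 \<longrightarrow> r1 \<le> exp (2 * lam * T) * R0 \<longrightarrow> 0 \<le> r2 \<longrightarrow> r2 \<le> exp (2 * lam * T) * R0 \<longrightarrow>
         (A1 r1 - A2 r2)^2 \<le> \<Lambda> * (d + (r1 - r2)^2)) \<and>
     d \<ge> 0 \<and> h10_sq (U 0) \<le> R0 \<and> h10_sq (V 0) \<le> R0 \<and> 0 < t \<and> t \<le> T"
    have cU: "csol A1 lam f U Ut Ux Uxx" and cV: "csol A2 lam f V Vt Vx Vxx"
      and Am1: "\<forall>r\<ge>0. m \<le> A1 r" and Am2: "\<forall>r\<ge>0. m \<le> A2 r"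
      and coef: "\<forall>r1 r2. 0 \<le> r1 \<longrightarrow> r1 \<le> R \<longrightarrow> 0 \<le> r2 \<longrightarrow> r2 \<le> R \<longrightarrow> (A1 r1 - A2 r2)^2 \<le> \<Lambda> * (d + (r1 - r2)^2)"
      and d: "d \<ge> 0" and U0: "h10_sq (U 0) \<le> R0" and V0: "h10_sq (V 0) \<le> R0" and t: "0 < t" "t \<le> T"
      using H unfolding R_def by auto
    have XR: "h10_sq (U s) \<le> R \<and> h10_sq (V s) \<le> R" if s: "0 \<le> s" "s \<le> T" for s
    proof -
      have e: "exp (2 * lam * s) \<le> exp (2 * lam * T)" using lam s by (simp add: mult_left_mono)
      have "h10_sq (U s) \<le> exp (2 * lam * s) * h10_sq (U 0)"
        by (rule cs_Xbound[OF cU fd f1 cf' f0 Am1 _ lam s(1)]) (use m in simp)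
      also have "\<dots> \<le> exp (2 * lam * T) * R0"
        using e U0 h10_sq_nonneg[of "U 0"] R0 by (intro mult_mono) auto
      finally have 1: "h10_sq (U s) \<le> R" unfolding R_def .
      have "h10_sq (V s) \<le> exp (2 * lam * s) * h10_sq (V 0)"
        by (rule cs_Xbound[OF cV fd f1 cf' f0 Am2 _ lam s(1)]) (use m in simp)
      also have "\<dots> \<le> exp (2 * lam * T) * R0"
        using e V0 h10_sq_nonneg[of "V 0"] R0 by (intro mult_mono) auto
      finally have 2: "h10_sq (V s) \<le> R" unfolding R_def .
      show ?thesis using 1 2 by simp
    qed
    define Wf where "Wf s = (h10_dist (U s) (V s))^2" for s
    have step: "Wf t \<le> K1 * Wf \<epsilon> + K2 * d" if e: "0 < \<epsilon>" "\<epsilon> \<le> t" for \<epsilon>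
    proof -
      have "Wf t \<le> exp ((C1 + C2 * lam * R / m) * T) * exp (C2 / (2 * m) * R) * Wf \<epsilon>
           + exp ((C1 + C2 * lam * R / m) * T) * (exp (C2 / (2 * m) * R) * C3 / (2 * m)) * (2 * lam * R * T + R) * d"
      proof (rule gronwall_abs[where Xv="\<lambda>s. h10_sq (V s)"
            and DW="\<lambda>s. -2 * integral {0..pi} (\<lambda>x. (Ut s x - Vt s x) * (Uxx s x - Vxx s x))"
            and DXv="\<lambda>s. -2 * integral {0..pi} (\<lambda>x. Vt s x * Vxx s x)"
            and Z="\<lambda>s. integral {0..pi} (\<lambda>x. (Vxx s x)^2)", OF e t(2)])
        fix s assume s: "\<epsilon> \<le> s" "s \<le> t"
        have sp: "s > 0" using s e by simp
        have sT: "s \<le> T" using s t by simp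
        show "(Wf has_real_derivative -2 * integral {0..pi} (\<lambda>x. (Ut s x - Vt s x) * (Uxx s x - Vxx s x))) (at s)"
          unfolding Wf_def by (rule W_deriv[OF cU cV sp])
        show "((\<lambda>s. h10_sq (V s)) has_real_derivative -2 * integral {0..pi} (\<lambda>x. Vt s x * Vxx s x)) (at s)"
          by (rule cs_Xderiv[OF cV sp])
        show "-2 * integral {0..pi} (\<lambda>x. (Ut s x - Vt s x) * (Uxx s x - Vxx s x))
            \<le> C1 * Wf s + (C2 * Wf s + C3 * d) * integral {0..pi} (\<lambda>x. (Vxx s x)^2)"
          unfolding Wf_def C1_def C2_def C3_def
          by (rule key_ineq[OF cU cV m lam Am1 coef La d K(2) K(1) sp]) (use XR[of s] sp sT in auto)
        show "-2 * integral {0..pi} (\<lambda>x. Vt s x * Vxx s x) \<le> -2 * m * integral {0..pi} (\<lambda>x. (Vxx s x)^2) + 2 * lam * h10_sq (V s)"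
          by (rule cs_Xineq[OF cV fd f1 cf' f0 Am2 lam sp])
        show "0 \<le> h10_sq (V s) \<and> h10_sq (V s) \<le> R" using XR[of s] sp sT h10_sq_nonneg by auto
        show "0 \<le> Wf s" unfolding Wf_def by simp
        show "0 \<le> integral {0..pi} (\<lambda>x. (Vxx s x)^2)" by (rule integral_sq_nonneg)
      qed (use C d m lam in auto)
      thus ?thesis unfolding K1_def K2_def by simp
    qed
    define dU where "dU s = h10_dist (U s) (U 0)" for s
    define dV where "dV s = h10_dist (V s) (V 0)" for s
    define d0 where "d0 = h10_dist (U 0) (V 0)"
    have tri: "Wf \<epsilon> \<le> (dU \<epsilon> + d0 + dV \<epsilon>)^2" if e: "0 < \<epsilon>" for \<epsilon>
    proof -
      have h: "h10 (U \<epsilon>)" "h10 (U 0)" "h10 (V 0)" "h10 (V \<epsilon>)"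
        using cs_h10[OF cU] cs_h10[OF cV] e by auto
      have "h10_dist (U \<epsilon>) (V \<epsilon>) \<le> h10_dist (U \<epsilon>) (U 0) + h10_dist (U 0) (V \<epsilon>)"
        by (rule h10_dist_tri[OF h(1,2,4)])
      also have "h10_dist (U 0) (V \<epsilon>) \<le> h10_dist (U 0) (V 0) + h10_dist (V 0) (V \<epsilon>)"
        by (rule h10_dist_tri[OF h(2,3,4)])
      finally have "h10_dist (U \<epsilon>) (V \<epsilon>) \<le> dU \<epsilon> + d0 + dV \<epsilon>"
        unfolding dU_def dV_def d0_def using h10_dist_sym[of "V 0" "V \<epsilon>"] by simp
      thus ?thesis unfolding Wf_def by (intro power_mono) (auto simp: h10_dist_nonneg)
    qed
    have limU: "(dU \<longlongrightarrow> 0) (at_right 0)" unfolding dU_def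
      using cs_cont[OF cU, of 0] by (rule tendsto_within_subset) auto
    have limV: "(dV \<longlongrightarrow> 0) (at_right 0)" unfolding dV_def
      using cs_cont[OF cV, of 0] by (rule tendsto_within_subset) auto
    have lim: "((\<lambda>\<epsilon>. K1 * (dU \<epsilon> + d0 + dV \<epsilon>)^2 + K2 * d) \<longlongrightarrow> K1 * (0 + d0 + 0)^2 + K2 * d) (at_right 0)"
      by (intro tendsto_intros limU limV)
    have "Wf t \<le> K1 * (0 + d0 + 0)^2 + K2 * d"
    proof (rule tendsto_le[OF _ lim tendsto_const])
      show "at_right (0::real) \<noteq> bot" by simp
      show "\<forall>\<^sub>F \<epsilon> in at_right 0. Wf t \<le> K1 * (dU \<epsilon> + d0 + dV \<epsilon>)^2 + K2 * d"
        unfolding eventually_at_right[OF t(1)]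
      proof (intro exI[of _ t] conjI allI impI)
        fix \<epsilon> :: real assume e: "0 < \<epsilon>" "\<epsilon> < t"
        have "Wf t \<le> K1 * Wf \<epsilon> + K2 * d" using step e by simp
        also have "K1 * Wf \<epsilon> \<le> K1 * (dU \<epsilon> + d0 + dV \<epsilon>)^2" using tri[OF e(1)] K1 by (rule mult_left_mono)
        finally show "Wf t \<le> K1 * (dU \<epsilon> + d0 + dV \<epsilon>)^2 + K2 * d" by simp
      qed (use t in simp)
    qed
    hence "(h10_dist (U t) (V t))^2 \<le> K1 * (h10_dist (U 0) (V 0))^2 + K2 * d"
      unfolding Wf_def d0_def by simp
    then show "(h10_dist (U t) (V t))^2 \<le> K1 * (h10_dist (U 0) (V 0))^2 + K2 * d" .
  qed
qed

lemma h10_deriv_cong: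
  assumes "\<forall>x\<in>{0..pi}. u x = v x"
  shows "h10_deriv u = h10_deriv v"
proof -
  have "(\<lambda>g. h10_rep u g) = (\<lambda>g. h10_rep v g)" using h10_rep_cong[OF assms] by auto
  thus ?thesis unfolding h10_deriv_def by simp
qed

lemma h10_dist_self: "h10_dist u u = 0"
  unfolding h10_dist_def by simp

lemma coef_bound:
  fixes a :: "real \<Rightarrow> real" and L P R \<tau>1 \<tau>2 r1 r2 :: real
  assumes L: "L \<ge> 0" and lip: "\<forall>s\<ge>0. \<forall>r\<ge>0. \<bar>a s - a r\<bar> \<le> L * \<bar>s - r\<bar>"
    and P: "P \<ge> 0" and t1: "\<tau>1 \<in> {0..1}" and t2: "\<tau>2 \<in> {0..1}"
    and r1: "0 \<le> r1" "r1 \<le> R" and r2: "0 \<le> r2" "r2 \<le> R"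
  shows "(a (\<tau>1 * r1 + (1 - \<tau>1) * P) - a (\<tau>2 * r2 + (1 - \<tau>2) * P))^2
           \<le> (2 * L^2 * ((R + P)^2 + 1)) * ((\<tau>1 - \<tau>2)^2 + (r1 - r2)^2)"
proof -
  define x1 where "x1 = \<tau>1 * r1 + (1 - \<tau>1) * P"
  define x2 where "x2 = \<tau>2 * r2 + (1 - \<tau>2) * P"
  have x1: "x1 \<ge> 0" unfolding x1_def using t1 r1 P by (auto intro!: add_nonneg_nonneg mult_nonneg_nonneg)
  have x2: "x2 \<ge> 0" unfolding x2_def using t2 r2 P by (auto intro!: add_nonneg_nonneg mult_nonneg_nonneg)
  have e: "x1 - x2 = (\<tau>1 - \<tau>2) * (r1 - P) + \<tau>2 * (r1 - r2)"
    unfolding x1_def x2_def by (simp add: algebra_simps)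
  have b1: "\<bar>r1 - P\<bar> \<le> R + P" using r1 P by auto
  have "\<bar>x1 - x2\<bar> \<le> \<bar>\<tau>1 - \<tau>2\<bar> * \<bar>r1 - P\<bar> + \<tau>2 * \<bar>r1 - r2\<bar>"
    unfolding e using t2 by (metis abs_mult abs_of_nonneg abs_triangle_ineq atLeastAtMost_iff)
  also have "\<dots> \<le> \<bar>\<tau>1 - \<tau>2\<bar> * (R + P) + \<bar>r1 - r2\<bar>"
  proof -
    have "\<bar>\<tau>1 - \<tau>2\<bar> * \<bar>r1 - P\<bar> \<le> \<bar>\<tau>1 - \<tau>2\<bar> * (R + P)" using b1 by (intro mult_left_mono) auto
    moreover have "\<tau>2 * \<bar>r1 - r2\<bar> \<le> 1 * \<bar>r1 - r2\<bar>" using t2 by (intro mult_right_mono) auto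
    ultimately show ?thesis by simp
  qed
  finally have dx: "\<bar>x1 - x2\<bar> \<le> \<bar>\<tau>1 - \<tau>2\<bar> * (R + P) + \<bar>r1 - r2\<bar>" .
  have "\<bar>a x1 - a x2\<bar> \<le> L * \<bar>x1 - x2\<bar>" using lip x1 x2 by blast
  also have "\<dots> \<le> L * (\<bar>\<tau>1 - \<tau>2\<bar> * (R + P) + \<bar>r1 - r2\<bar>)" using dx L by (rule mult_left_mono)
  finally have ab: "\<bar>a x1 - a x2\<bar> \<le> L * (\<bar>\<tau>1 - \<tau>2\<bar> * (R + P) + \<bar>r1 - r2\<bar>)" .
  have "(a x1 - a x2)^2 = \<bar>a x1 - a x2\<bar>^2" by simp
  also have "\<dots> \<le> (L * (\<bar>\<tau>1 - \<tau>2\<bar> * (R + P) + \<bar>r1 - r2\<bar>))^2"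
    using ab by (intro power_mono) auto
  also have "\<dots> = L^2 * (\<bar>\<tau>1 - \<tau>2\<bar> * (R + P) + \<bar>r1 - r2\<bar>)^2" by (simp add: power_mult_distrib)
  also have "\<dots> \<le> L^2 * (2 * ((\<tau>1 - \<tau>2)^2 * (R + P)^2) + 2 * (r1 - r2)^2)"
  proof (rule mult_left_mono)
    have "(\<bar>\<tau>1 - \<tau>2\<bar> * (R + P) + \<bar>r1 - r2\<bar>)^2 \<le> 2 * (\<bar>\<tau>1 - \<tau>2\<bar> * (R + P))^2 + 2 * \<bar>r1 - r2\<bar>^2"
      using sum_squares_bound[of "\<bar>\<tau>1 - \<tau>2\<bar> * (R + P)" "\<bar>r1 - r2\<bar>"] by (simp add: power2_eq_square algebra_simps)
    thus "(\<bar>\<tau>1 - \<tau>2\<bar> * (R + P) + \<bar>r1 - r2\<bar>)^2 \<le> 2 * ((\<tau>1 - \<tau>2)^2 * (R + P)^2) + 2 * (r1 - r2)^2"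
      by (simp add: power_mult_distrib)
  qed simp
  also have "\<dots> \<le> (2 * L^2 * ((R + P)^2 + 1)) * ((\<tau>1 - \<tau>2)^2 + (r1 - r2)^2)"
  proof -
    have A: "(\<tau>1 - \<tau>2)^2 * (R + P)^2 \<le> (\<tau>1 - \<tau>2)^2 * ((R + P)^2 + 1)" by (intro mult_left_mono) auto
    have B: "(r1 - r2)^2 \<le> (r1 - r2)^2 * ((R + P)^2 + 1)"
      using mult_left_mono[of 1 "(R + P)^2 + 1" "(r1 - r2)^2"] by simp
    have "L^2 * (2 * ((\<tau>1 - \<tau>2)^2 * (R + P)^2) + 2 * (r1 - r2)^2)
        \<le> L^2 * (2 * ((\<tau>1 - \<tau>2)^2 * ((R + P)^2 + 1)) + 2 * ((r1 - r2)^2 * ((R + P)^2 + 1)))"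
      using A B by (intro mult_left_mono) auto
    also have "\<dots> = (2 * L^2 * ((R + P)^2 + 1)) * ((\<tau>1 - \<tau>2)^2 + (r1 - r2)^2)"
      by (simp add: algebra_simps)
    finally show ?thesis .
  qed
  finally show ?thesis unfolding x1_def x2_def .
qed

theorem lemma3p2:
  fixes a f :: "real \<Rightarrow> real" and lam m M :: real and N :: nat
    and phi :: "real \<Rightarrow> real"
    and S :: "real \<Rightarrow> real \<Rightarrow> (real \<Rightarrow> real) \<Rightarrow> (real \<Rightarrow> real)"
    and \<tau> :: "nat \<Rightarrow> real" and \<tau>0 :: real
    and u0s :: "nat \<Rightarrow> real \<Rightarrow> real" and u0 :: "real \<Rightarrow> real"
    and t :: "nat \<Rightarrow> real" and t0 :: real
  assumes lam_pos: "lam > 0"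
    and a_C1: "\<exists>a'. (\<forall>s\<ge>0. (a has_real_derivative a' s) (at s within {0..})) \<and> continuous_on {0..} a'"
    and a_mono: "mono_on {0..} a"
    and a_lip: "\<exists>L. \<forall>s\<ge>0. \<forall>r\<ge>0. \<bar>a s - a r\<bar> \<le> L * \<bar>s - r\<bar>"
    and m_pos: "0 < m" and a_bounds: "\<forall>s\<ge>0. m \<le> a s \<and> a s \<le> M"
    and f_C2: "\<exists>f' f''. (\<forall>s. (f has_real_derivative f' s) (at s)) \<and>
                       (\<forall>s. (f' has_real_derivative f'' s) (at s)) \<and> continuous_on UNIV f'' \<and>
                       f' 0 = 1 \<and> (\<forall>s. s \<noteq> 0 \<longrightarrow> s * f'' s < 0)"
    and f_odd: "\<forall>s. f (- s) = - f s" and f0: "f 0 = 0"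
    and f_limsup: "Limsup at_infinity (\<lambda>s. ereal (f s / s)) \<le> 0"
    and N_pos: "N \<ge> 1"
    and N_low: "a 0 * (real N)^2 < lam" and N_up: "lam < a 0 * (real N + 1)^2"
    and phi_eq: "is_equilibrium a lam f phi"
    and phi_zeros: "card {x\<in>{0..pi}. phi x = 0} = N + 1"
    and S_sol: "\<forall>s\<in>{0..1}. \<forall>v. h10 v \<longrightarrow>
        is_solution (\<lambda>r. a (s * r + (1 - s) * h10_sq phi)) lam f v (\<lambda>r. S s r v)"
    and tau_range: "\<forall>n. \<tau> n \<in> {0..1}" and tau0_range: "\<tau>0 \<in> {0..1}"
    and tau_lim: "\<tau> \<longlonglongrightarrow> \<tau>0"
    and u0s_h10: "\<forall>n. h10 (u0s n)" and u0_h10: "h10 u0"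
    and u0_lim: "(\<lambda>n. h10_dist (u0s n) u0) \<longlonglongrightarrow> 0"
    and t_nonneg: "\<forall>n. t n \<ge> 0" and t0_nonneg: "t0 \<ge> 0"
    and t_lim: "t \<longlonglongrightarrow> t0"
  shows "(\<lambda>n. h10_dist (S (\<tau> n) (t n) (u0s n)) (S \<tau>0 t0 u0)) \<longlonglongrightarrow> 0"
proof -
  obtain f' f'' where fd: "\<forall>s. (f has_real_derivative f' s) (at s)"
      and fd2: "\<forall>s. (f' has_real_derivative f'' s) (at s)" and f'0: "f' 0 = 1"
      and sgn: "\<forall>s. s \<noteq> 0 \<longrightarrow> s * f'' s < 0"
    using f_C2 by blast
  have f1: "\<forall>s. f' s \<le> 1" using fprime_le1[OF fd2 f'0 sgn] by blast
  have cf': "continuous_on UNIV f'"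
    by (rule has_real_derivative_imp_continuous_on) (use fd2 in blast)
  obtain L where lip: "\<forall>s\<ge>0. \<forall>r\<ge>0. \<bar>a s - a r\<bar> \<le> L * \<bar>s - r\<bar>" using a_lip by blast
  define L0 where "L0 = max L 0"
  have L0: "L0 \<ge> 0" unfolding L0_def by simp
  have lip0: "\<forall>s\<ge>0. \<forall>r\<ge>0. \<bar>a s - a r\<bar> \<le> L0 * \<bar>s - r\<bar>"
  proof (intro allI impI)
    fix s r :: real assume "s \<ge> 0" "r \<ge> 0"
    hence "\<bar>a s - a r\<bar> \<le> L * \<bar>s - r\<bar>" using lip by blast
    also have "\<dots> \<le> L0 * \<bar>s - r\<bar>" unfolding L0_def by (intro mult_right_mono) auto
    finally show "\<bar>a s - a r\<bar> \<le> L0 * \<bar>s - r\<bar>" .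
  qed
  define P where "P = h10_sq phi"
  have P0: "P \<ge> 0" unfolding P_def by (rule h10_sq_nonneg)
  define A where "A s r = a (s * r + (1 - s) * P)" for s r
  have Am: "\<forall>r\<ge>0. m \<le> A s r" if s: "s \<in> {0..1}" for s
  proof (intro allI impI)
    fix r :: real assume r: "r \<ge> 0"
    have "s * r + (1 - s) * P \<ge> 0" using s r P0 by (auto intro!: add_nonneg_nonneg mult_nonneg_nonneg)
    thus "m \<le> A s r" unfolding A_def using a_bounds by blast
  qed
  define U where "U n = (\<lambda>r. S (\<tau> n) r (u0s n))" for n
  define V where "V = (\<lambda>r. S \<tau>0 r u0)"
  have solU: "is_solution (A (\<tau> n)) lam f (u0s n) (U n)" for n
    using S_sol tau_range u0s_h10 unfolding U_def A_def P_def by blast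
  have solV: "is_solution (A \<tau>0) lam f u0 V"
    using S_sol tau0_range u0_h10 unfolding V_def A_def P_def by blast
  obtain Vt Vx Vxx where cV: "csol (A \<tau>0) lam f V Vt Vx Vxx" using is_solution_csol[OF solV] by blast
  have hU: "h10 (U n r)" if "r \<ge> 0" for n r using solU[of n] that unfolding is_solution_def by blast
  have hV: "h10 (V r)" if "r \<ge> 0" for r using solV that unfolding is_solution_def by blast
  have dU0: "h10_deriv (U n 0) = h10_deriv (u0s n)" for n
    by (rule h10_deriv_cong) (use is_solution_init[OF solU[of n]] in blast)
  have dV0: "h10_deriv (V 0) = h10_deriv u0"
    by (rule h10_deriv_cong) (use is_solution_init[OF solV] in blast)
  define dn where "dn n = h10_dist (u0s n) u0" for n
  have dist0: "h10_dist (U n 0) (V 0) = dn n" for n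
    unfolding dn_def h10_dist_def dU0 dV0 ..
  obtain B where B: "B > 0" "\<forall>n. norm (dn n) \<le> B"
  proof -
    have "convergent dn" unfolding dn_def using u0_lim by (auto simp: convergent_def)
    hence "Bseq dn" by (rule convergent_imp_Bseq)
    thus ?thesis using that by (auto simp: Bseq_def)
  qed
  define R0 where "R0 = (sqrt (h10_sq u0) + B)^2"
  have R0: "R0 \<ge> 0" unfolding R0_def by simp
  have sq0: "sqi (h10_deriv u0)" using h10_rep_sqi[OF h10_deriv_rep[OF u0_h10]] .
  have Un0: "h10_sq (U n 0) \<le> R0" for n
  proof -
    have sqn: "sqi (h10_deriv (u0s n))" using h10_rep_sqi[OF h10_deriv_rep] u0s_h10 by blast
    have z: "sqi (\<lambda>x. 0)" by (rule sqi_cont) simp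
    have "nrm (h10_deriv (u0s n)) \<le> nrm (\<lambda>x. h10_deriv (u0s n) x - h10_deriv u0 x) + nrm (h10_deriv u0)"
      using sqi_triangle_diff[OF sqn sq0 z] by simp
    hence "sqrt (h10_sq (U n 0)) \<le> dn n + sqrt (h10_sq u0)"
      unfolding sqrt_h10_sq dn_def h10_dist_nrm dU0 .
    also have "\<dots> \<le> sqrt (h10_sq u0) + B" using B(2)[rule_format, of n] by simp
    finally have "(sqrt (h10_sq (U n 0)))^2 \<le> (sqrt (h10_sq u0) + B)^2"
      by (intro power_mono) (auto simp: h10_sq_nonneg)
    thus ?thesis unfolding R0_def using h10_sq_nonneg by simp
  qed
  have V0b: "h10_sq (V 0) \<le> R0"
  proof -
    have "h10_sq (V 0) = (sqrt (h10_sq u0))^2" unfolding h10_sq_def dV0 using integral_sq_nonneg by simp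
    also have "\<dots> \<le> (sqrt (h10_sq u0) + B)^2" using B(1) by (intro power_mono) (auto simp: h10_sq_nonneg)
    finally show ?thesis unfolding R0_def .
  qed
  define T where "T = t0 + 1"
  have T: "T > 0" unfolding T_def using t0_nonneg by simp
  define R where "R = exp (2 * lam * T) * R0"
  define La where "La = 2 * L0^2 * ((R + P)^2 + 1)"
  have La: "La \<ge> 0" unfolding La_def by simp
  obtain K1 K2 where KK: "\<forall>A1 A2 U Ut Ux Uxx V Vt Vx Vxx d t.
     csol A1 lam f U Ut Ux Uxx \<and> csol A2 lam f V Vt Vx Vxx \<and>
     (\<forall>r\<ge>0. m \<le> A1 r) \<and> (\<forall>r\<ge>0. m \<le> A2 r) \<and>
     (\<forall>r1 r2. 0 \<le> r1 \<longrightarrow> r1 \<le> exp (2 * lam * T) * R0 \<longrightarrow> 0 \<le> r2 \<longrightarrow> r2 \<le> exp (2 * lam * T) * R0 \<longrightarrow>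
         (A1 r1 - A2 r2)^2 \<le> La * (d + (r1 - r2)^2)) \<and>
     d \<ge> 0 \<and> h10_sq (U 0) \<le> R0 \<and> h10_sq (V 0) \<le> R0 \<and> 0 < t \<and> t \<le> T
     \<longrightarrow> (h10_dist (U t) (V t))^2 \<le> K1 * (h10_dist (U 0) (V 0))^2 + K2 * d"
    using W_estimate[OF fd f1 cf' f0 m_pos less_imp_le[OF lam_pos] T La R0] by blast
  have bound: "(h10_dist (U n s) (V s))^2 \<le> (\<bar>K1\<bar> + 1) * (dn n)^2 + \<bar>K2\<bar> * (\<tau> n - \<tau>0)^2"
    if s: "0 \<le> s" "s \<le> T" for n s
  proof (cases "s = 0")
    case True
    have "(h10_dist (U n s) (V s))^2 = (dn n)^2" using True dist0 by simp
    also have "\<dots> \<le> (\<bar>K1\<bar> + 1) * (dn n)^2 + \<bar>K2\<bar> * (\<tau> n - \<tau>0)^2"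
    proof -
      have "(dn n)^2 \<le> (\<bar>K1\<bar> + 1) * (dn n)^2" using mult_right_mono[of 1 "\<bar>K1\<bar> + 1" "(dn n)^2"] by simp
      moreover have "0 \<le> \<bar>K2\<bar> * (\<tau> n - \<tau>0)^2" by simp
      ultimately show ?thesis by linarith
    qed
    finally show ?thesis .
  next
    case False
    hence sp: "s > 0" using s by simp
    obtain Ut Ux Uxx where cU: "csol (A (\<tau> n)) lam f (U n) Ut Ux Uxx" using is_solution_csol[OF solU[of n]] by blast
    have coef: "\<forall>r1 r2. 0 \<le> r1 \<longrightarrow> r1 \<le> exp (2 * lam * T) * R0 \<longrightarrow> 0 \<le> r2 \<longrightarrow> r2 \<le> exp (2 * lam * T) * R0 \<longrightarrow>
         (A (\<tau> n) r1 - A \<tau>0 r2)^2 \<le> La * ((\<tau> n - \<tau>0)^2 + (r1 - r2)^2)"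
      unfolding A_def La_def R_def[symmetric]
      using coef_bound[OF L0 lip0 P0 tau_range[rule_format, of n] tau0_range] by blast
    have "(h10_dist (U n s) (V s))^2 \<le> K1 * (h10_dist (U n 0) (V 0))^2 + K2 * (\<tau> n - \<tau>0)^2"
      using KK[THEN spec[where x="A (\<tau> n)"], THEN spec[where x="A \<tau>0"], THEN spec[where x="U n"],
          THEN spec[where x=Ut], THEN spec[where x=Ux], THEN spec[where x=Uxx], THEN spec[where x=V],
          THEN spec[where x=Vt], THEN spec[where x=Vx], THEN spec[where x=Vxx],
          THEN spec[where x="(\<tau> n - \<tau>0)^2"], THEN spec[where x=s]]
        cU cV Am[OF tau_range[rule_format, of n]] Am[OF tau0_range] coef Un0[of n] V0b sp s(2) by auto
    also have "\<dots> \<le> (\<bar>K1\<bar> + 1) * (dn n)^2 + \<bar>K2\<bar> * (\<tau> n - \<tau>0)^2"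
    proof -
      have "K1 * (dn n)^2 \<le> (\<bar>K1\<bar> + 1) * (dn n)^2" by (intro mult_right_mono) auto
      moreover have "K2 * (\<tau> n - \<tau>0)^2 \<le> \<bar>K2\<bar> * (\<tau> n - \<tau>0)^2" by (intro mult_right_mono) auto
      ultimately show ?thesis unfolding dist0 by linarith
    qed
    finally show ?thesis .
  qed
  define b where "b n = sqrt ((\<bar>K1\<bar> + 1) * (dn n)^2 + \<bar>K2\<bar> * (\<tau> n - \<tau>0)^2)" for n
  have dn_lim: "dn \<longlonglongrightarrow> 0" unfolding dn_def by (rule u0_lim)
  have tau_lim0: "(\<lambda>n. \<tau> n - \<tau>0) \<longlonglongrightarrow> 0" using tau_lim by (simp add: LIM_zero)
  have b_lim: "b \<longlonglongrightarrow> 0"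
  proof -
    have "b \<longlonglongrightarrow> sqrt ((\<bar>K1\<bar> + 1) * 0^2 + \<bar>K2\<bar> * 0^2)"
      unfolding b_def by (intro tendsto_intros dn_lim tau_lim0)
    thus ?thesis by simp
  qed
  define \<phi> where "\<phi> s = h10_dist (V s) (V t0)" for s
  have phi_lim: "(\<lambda>n. \<phi> (t n)) \<longlonglongrightarrow> 0"
  proof -
    have "continuous (at t0 within {0..}) \<phi>"
      unfolding continuous_within \<phi>_def h10_dist_self using cs_cont[OF cV t0_nonneg] by simp
    hence "(\<phi> \<circ> t) \<longlonglongrightarrow> \<phi> t0"
      unfolding continuous_within_sequentially using t_nonneg t_lim by auto
    thus ?thesis unfolding \<phi>_def h10_dist_self by (simp add: comp_def)
  qed
  have evT: "\<forall>\<^sub>F n in sequentially. t n \<le> T"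
  proof -
    have "\<forall>\<^sub>F n in sequentially. dist (t n) t0 < 1" using t_lim by (rule tendstoD) simp
    thus ?thesis by eventually_elim (auto simp: T_def dist_real_def)
  qed
  show ?thesis
  proof (rule tendsto_sandwich[where f="\<lambda>n. 0" and h="\<lambda>n. b n + \<phi> (t n)"])
    show "\<forall>\<^sub>F n in sequentially. 0 \<le> h10_dist (S (\<tau> n) (t n) (u0s n)) (S \<tau>0 t0 u0)"
      by (simp add: h10_dist_nonneg)
    show "\<forall>\<^sub>F n in sequentially. h10_dist (S (\<tau> n) (t n) (u0s n)) (S \<tau>0 t0 u0) \<le> b n + \<phi> (t n)"
      using evT
    proof eventually_elim
      case (elim n)
      have tn: "0 \<le> t n" using t_nonneg by blast
      have "h10_dist (U n (t n)) (V t0) \<le> h10_dist (U n (t n)) (V (t n)) + h10_dist (V (t n)) (V t0)"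
        by (rule h10_dist_tri[OF hU[OF tn] hV[OF tn] hV[OF t0_nonneg]])
      also have "h10_dist (U n (t n)) (V (t n)) \<le> b n"
        unfolding b_def by (rule real_le_rsqrt) (rule bound[OF tn elim])
      finally show ?case unfolding U_def V_def \<phi>_def by simp
    qed
    show "((\<lambda>n. 0) \<longlongrightarrow> 0) sequentially" by simp
    show "((\<lambda>n. b n + \<phi> (t n)) \<longlongrightarrow> 0) sequentially"
      using tendsto_add[OF b_lim phi_lim] by simp
  qed
qed

end
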